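(* Let $\alpha>0$, let $\{Y_t:t\in\mathbb{Z}\}$ be an $\mathbb{R}^d$-valued process and let $\{M_t:t\in\mathbb{Z}\}$ be an $\mathbb{R}^d$-valued back-and-forth tail chain with index $\alpha$. Suppose $\mathcal{L}(Y_0,\dots,Y_t)=\mathcal{L}(M_0,\dots,M_t)$ for all $t\ge0$, and that $$\mathbb{E}[f(Y_{-s},\dots,Y_t)]=\mathbb{E}\Big[f\Big(\tfrac{Y_0}{\|Y_s\|},\dots,\tfrac{Y_{s+t}}{\|Y_s\|}\Big)\|Y_s\|^\alpha\mathbf{1}_{\{Y_s\ne0\}}\Big]$$ for all $s,t\ge0$ and all bounded measurable $f:(\mathbb{R}^d)^{s+t+1}\to\mathbb{R}$ with $f(y_{-s},\dots,y_t)=0$ whenever $y_{-s}=0$. Then $\mathcal{L}(Y_{-s},\dots,Y_t)=\mathcal{L}(M_{-s},\dots,M_t)$ for all $s,t\ge0$.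
   Context: $\|\cdot\|$ is the Euclidean norm and $\mathbb{S}^{d-1}$ the unit sphere in $\mathbb{R}^d$. $\mathcal{M}_\alpha$ is the set of probability measures $P$ on $\mathbb{S}^{d-1}\times\mathbb{R}^d$ with $\int_{\mathbb{S}^{d-1}\times(\mathbb{R}^d\setminus\{0\})}\mathbf{1}_S(m/\|m\|)\|m\|^\alpha P(ds,dm)\le P(S\times\mathbb{R}^d)$ for every Borel $S\subset\mathbb{S}^{d-1}$; for $P\in\mathcal{M}_\alpha$ the adjoint $P^*$ is given by $P^*(S\times\{0\})=P(S\times\mathbb{R}^d)-\int_{\mathbb{S}^{d-1}\times(\mathbb{R}^d\setminus\{0\})}\mathbf{1}_S(m/\|m\|)\|m\|^\alpha P(ds,dm)$ for Borel $S\subset\mathbb{S}^{d-1}$ and $P^*(E)=\int_{\mathbb{S}^{d-1}\times(\mathbb{R}^d\setminus\{0\})}\mathbf{1}_E(m/\|m\|,s/\|m\|)\|m\|^\alpha P(ds,dm)$ for Borel $E\subset\mathbb{S}^{d-1}\times(\mathbb{R}^d\setminus\{0\})$. An $\mathbb{R}^d$-valued process $\{M_t:t\in\mathbb{Z}\}$ is a back-and-forth tail chain with index $\alpha$ if: (i) $\mathcal{L}(M_0,M_1)$ and $\mathcal{L}(M_0,M_{-1})$ belong to $\mathcal{M}_\alpha$ and are adjoint to each other; (ii) $\{M_t:t\ge0\}$ is a Markov chain with respect to the filtration $\sigma(M_s,-\infty<s\le t)$, $t\ge0$, with kernel $\Pr(M_t\in\cdot\mid M_{t-1}=x)=\delta_0(\cdot)$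 if $x=0$ and $=\Pr(\|x\|M_1\in\cdot\mid M_0=x/\|x\|)$ if $x\ne0$; (iii) $\{M_{-t}:t\ge0\}$ is a Markov chain with respect to the filtration $\sigma(M_{-s},-\infty<s\le t)$, $t\ge0$, with kernel $\Pr(M_{-t}\in\cdot\mid M_{-t+1}=x)=\delta_0(\cdot)$ if $x=0$ and $=\Pr(\|x\|M_{-1}\in\cdot\mid M_0=x/\|x\|)$ if $x\ne0$. *)

theory Defs
  imports "HOL-Probability.Probability"
begin

text \<open>The unit sphere S^{d-1} is sphere 0 1 in the euclidean space 'd. A measure on
  S^{d-1} x R^d is rendered as a probability measure on the Borel sets of 'd x 'd that
  is concentrated on sphere 0 1 x UNIV.\<close>

definition in_M_alpha :: "real \<Rightarrow> ('d::euclidean_space \<times> 'd) measure \<Rightarrow> bool" where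
  "in_M_alpha \<alpha> P \<longleftrightarrow>
     prob_space P \<and> sets P = sets borel \<and> emeasure P (sphere 0 1 \<times> UNIV) = 1 \<and>
     (\<forall>S \<in> sets borel. S \<subseteq> sphere 0 1 \<longrightarrow>
        (\<integral>\<^sup>+ sm. indicator (sphere 0 1 \<times> (UNIV - {0})) sm
                  * indicator S (snd sm /\<^sub>R norm (snd sm))
                  * ennreal (norm (snd sm) powr \<alpha>) \<partial>P)
        \<le> emeasure P (S \<times> UNIV))"

definition is_adjoint :: "real \<Rightarrow> ('d::euclidean_space \<times> 'd) measure \<Rightarrow> ('d \<times> 'd) measure \<Rightarrow> bool" where
  "is_adjoint \<alpha> P Q \<longleftrightarrow>
     (\<forall>S \<in> sets borel. S \<subseteq> sphere 0 1 \<longrightarrow>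
        emeasure Q (S \<times> {0}) =
          emeasure P (S \<times> UNIV)
          - (\<integral>\<^sup>+ sm. indicator (sphere 0 1 \<times> (UNIV - {0})) sm
                  * indicator S (snd sm /\<^sub>R norm (snd sm))
                  * ennreal (norm (snd sm) powr \<alpha>) \<partial>P)) \<and>
     (\<forall>E \<in> sets borel. E \<subseteq> sphere 0 1 \<times> (UNIV - {0}) \<longrightarrow>
        emeasure Q E =
          (\<integral>\<^sup>+ sm. indicator (sphere 0 1 \<times> (UNIV - {0})) sm
                  * indicator E (snd sm /\<^sub>R norm (snd sm), fst sm /\<^sub>R norm (snd sm))
                  * ennreal (norm (snd sm) powr \<alpha>) \<partial>P))"

definition cond_law_kernel ::
  "'a measure \<Rightarrow> ('a \<Rightarrow> 'd::euclidean_space) \<Rightarrow> ('a \<Rightarrow> 'd) \<Rightarrow> ('d \<Rightarrow> 'd measure) \<Rightarrow> bool" where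
  "cond_law_kernel \<Omega> X Z \<kappa> \<longleftrightarrow>
     \<kappa> \<in> borel \<rightarrow>\<^sub>M prob_algebra borel \<and>
     (\<forall>A \<in> sets borel. \<forall>B \<in> sets borel.
        measure \<Omega> {\<omega> \<in> space \<Omega>. X \<omega> \<in> A \<and> Z \<omega> \<in> B}
        = (\<integral>u. indicator A u * measure (\<kappa> u) B \<partial>distr \<Omega> borel X))"

definition tail_kernel :: "('d::euclidean_space \<Rightarrow> 'd measure) \<Rightarrow> 'd \<Rightarrow> 'd measure" where
  "tail_kernel \<kappa> x =
     (if x = 0 then return borel 0 else distr (\<kappa> (x /\<^sub>R norm x)) borel (\<lambda>y. norm x *\<^sub>R y))"

definition gen_sigma :: "'a measure \<Rightarrow> (int \<Rightarrow> 'a \<Rightarrow> 'd::euclidean_space) \<Rightarrow> int set \<Rightarrow> 'a measure" where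
  "gen_sigma \<Omega> X I = sigma (space \<Omega>) (\<Union>u\<in>I. {X u -` B \<inter> space \<Omega> | B. B \<in> sets borel})"

definition back_and_forth_tail_chain ::
  "real \<Rightarrow> 'a measure \<Rightarrow> (int \<Rightarrow> 'a \<Rightarrow> 'd::euclidean_space) \<Rightarrow> bool" where
  "back_and_forth_tail_chain \<alpha> \<Omega> M \<longleftrightarrow>
     (\<forall>t. M t \<in> borel_measurable \<Omega>) \<and>
     (let P = distr \<Omega> borel (\<lambda>\<omega>. (M 0 \<omega>, M 1 \<omega>));
          Q = distr \<Omega> borel (\<lambda>\<omega>. (M 0 \<omega>, M (-1) \<omega>))
      in in_M_alpha \<alpha> P \<and> in_M_alpha \<alpha> Q \<and> is_adjoint \<alpha> P Q \<and> is_adjoint \<alpha> Q P) \<and>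
     (\<exists>\<kappa>. cond_law_kernel \<Omega> (M 0) (M 1) \<kappa> \<and>
        (\<forall>t::int \<ge> 1. \<forall>B \<in> sets borel. AE \<omega> in \<Omega>.
           real_cond_exp \<Omega> (gen_sigma \<Omega> M {..t - 1}) (\<lambda>\<omega>. indicator B (M t \<omega>)) \<omega>
           = measure (tail_kernel \<kappa> (M (t - 1) \<omega>)) B)) \<and>
     (\<exists>\<kappa>. cond_law_kernel \<Omega> (M 0) (M (-1)) \<kappa> \<and>
        (\<forall>t::int \<ge> 1. \<forall>B \<in> sets borel. AE \<omega> in \<Omega>.
           real_cond_exp \<Omega> (gen_sigma \<Omega> M {-(t - 1)..}) (\<lambda>\<omega>. indicator B (M (-t) \<omega>)) \<omega>
           = measure (tail_kernel \<kappa> (M (-t + 1) \<omega>)) B))"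

end

theory Submission
  imports Defs
begin


lemma gen_sigma_subalg:
  assumes "\<And>i. X i \<in> borel_measurable \<Omega>"
  shows "subalgebra \<Omega> (gen_sigma \<Omega> X I)"
proof -
  have G: "(\<Union>u\<in>I. {X u -` B \<inter> space \<Omega> | B. B \<in> sets borel}) \<subseteq> sets \<Omega>"
    using assms by (auto simp: measurable_def)
  hence G': "(\<Union>u\<in>I. {X u -` B \<inter> space \<Omega> | B. B \<in> sets borel}) \<subseteq> Pow (space \<Omega>)"
    using sets.sets_into_space by blast
  show ?thesis unfolding subalgebra_def gen_sigma_def
    using G G' by (simp add: space_measure_of sets_measure_of sets.sigma_sets_subset)
qed

lemma gen_sigma_meas:
  assumes "\<And>i. X i \<in> borel_measurable \<Omega>" "i \<in> I"
  shows "X i \<in> borel_measurable (gen_sigma \<Omega> X I)"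
proof (rule measurableI)
  have G: "(\<Union>u\<in>I. {X u -` B \<inter> space \<Omega> | B. B \<in> sets borel}) \<subseteq> sets \<Omega>"
    using assms by (auto simp: measurable_def)
  hence G': "(\<Union>u\<in>I. {X u -` B \<inter> space \<Omega> | B. B \<in> sets borel}) \<subseteq> Pow (space \<Omega>)"
    using sets.sets_into_space by blast
  fix x assume "x \<in> space (gen_sigma \<Omega> X I)"
  then show "X i x \<in> space borel" by simp
next
  fix B :: "'b set" assume "B \<in> sets borel"
  have G: "(\<Union>u\<in>I. {X u -` B \<inter> space \<Omega> | B. B \<in> sets borel}) \<subseteq> sets \<Omega>"
    using assms by (auto simp: measurable_def)
  hence G': "(\<Union>u\<in>I. {X u -` B \<inter> space \<Omega> | B. B \<in> sets borel}) \<subseteq> Pow (space \<Omega>)"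
    using sets.sets_into_space by blast
  have "X i -` B \<inter> space \<Omega> \<in> (\<Union>u\<in>I. {X u -` B \<inter> space \<Omega> | B. B \<in> sets borel})"
    using \<open>B \<in> sets borel\<close> assms(2) by blast
  then show "X i -` B \<inter> space (gen_sigma \<Omega> X I) \<in> sets (gen_sigma \<Omega> X I)"
    unfolding gen_sigma_def using G' by (simp add: space_measure_of sets_measure_of sigma_sets.Basic)
qed


lemma markov_step:
  fixes X :: "int \<Rightarrow> 'a \<Rightarrow> 'd::euclidean_space"
  assumes prob: "prob_space \<Omega>"
    and Xm: "\<And>i. X i \<in> borel_measurable \<Omega>"
    and fin: "finite J" and JI: "J \<subseteq> I" and jJ: "j \<notin> J" and j0: "j0 \<in> J"
    and K: "K \<in> borel \<rightarrow>\<^sub>M subprob_algebra borel"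
    and cond: "\<forall>B\<in>sets borel. AE \<omega> in \<Omega>.
        real_cond_exp \<Omega> (gen_sigma \<Omega> X I) (\<lambda>\<omega>. indicator B (X j \<omega>)) \<omega> = measure (K (X j0 \<omega>)) B"
    and F: "F \<in> borel_measurable (PiM (insert j J) (\<lambda>_. borel))"
  shows "(\<integral>\<^sup>+\<omega>. F (\<lambda>i\<in>insert j J. X i \<omega>) \<partial>\<Omega>)
       = (\<integral>\<^sup>+\<omega>. \<integral>\<^sup>+y. F ((\<lambda>i\<in>insert j J. X i \<omega>)(j := y)) \<partial>K (X j0 \<omega>) \<partial>\<Omega>)"
proof -
  interpret prob_space \<Omega> by fact
  define L where "L = insert j J"
  define W where "W = (\<lambda>\<omega>. \<lambda>i\<in>L. X i \<omega>)"
  define U where "U = (\<lambda>\<omega> y. \<lambda>i\<in>L. if i = j then y else X i \<omega>)"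
  have WU: "(W \<omega>)(j := y) = U \<omega> y" for \<omega> y
    unfolding W_def U_def L_def by (auto simp: fun_eq_iff)
  have Wm[measurable]: "W \<in> \<Omega> \<rightarrow>\<^sub>M PiM L (\<lambda>_. borel)"
    unfolding W_def by (intro measurable_restrict) (simp add: Xm)
  have Um[measurable]: "(\<lambda>(\<omega>, y). U \<omega> y) \<in> \<Omega> \<Otimes>\<^sub>M borel \<rightarrow>\<^sub>M PiM L (\<lambda>_. borel)"
  proof -
    have "(\<lambda>p::'a\<times>'d. \<lambda>i\<in>L. if i = j then snd p else X i (fst p)) \<in> \<Omega> \<Otimes>\<^sub>M borel \<rightarrow>\<^sub>M PiM L (\<lambda>_. borel)"
    proof (intro measurable_restrict)
      fix i show "(\<lambda>p::'a\<times>'d. if i = j then snd p else X i (fst p)) \<in> \<Omega> \<Otimes>\<^sub>M borel \<rightarrow>\<^sub>M borel"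
        by (cases "i = j") (simp_all add: measurable_compose[OF measurable_fst Xm])
    qed
    moreover have "(\<lambda>(\<omega>, y). U \<omega> y) = (\<lambda>p::'a\<times>'d. \<lambda>i\<in>L. if i = j then snd p else X i (fst p))"
      by (auto simp: U_def fun_eq_iff)
    ultimately show ?thesis by simp
  qed
  have Kc[measurable]: "(\<lambda>\<omega>. K (X j0 \<omega>)) \<in> \<Omega> \<rightarrow>\<^sub>M subprob_algebra borel"
    by (rule measurable_compose[OF Xm K])
  define N where "N = (\<lambda>\<omega>. distr (K (X j0 \<omega>)) (PiM L (\<lambda>_. borel)) (U \<omega>))"
  have Nm[measurable]: "N \<in> \<Omega> \<rightarrow>\<^sub>M subprob_algebra (PiM L (\<lambda>_. borel))"
    unfolding N_def by (rule measurable_distr2[OF Um Kc])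
  have Ksets: "sets (K x) = sets borel" for x
    using subprob_measurableD(2)[OF K, of x] by simp
  have Kspace: "space (K x) = UNIV" for x
    using sets_eq_imp_space_eq[OF Ksets[of x]] by simp
  have Kfin: "finite_measure (K x)" for x
    using measurable_space[OF K, of x] by (auto simp: space_subprob_algebra subprob_space_def)
  have Um1: "U \<omega> \<in> K (X j0 \<omega>) \<rightarrow>\<^sub>M PiM L (\<lambda>_. borel)" for \<omega>
    unfolding U_def measurable_cong_sets[OF Ksets refl]
    by (intro measurable_restrict) auto
  define \<mu>1 where "\<mu>1 = distr \<Omega> (PiM L (\<lambda>_. borel)) W"
  define \<mu>2 where "\<mu>2 = \<Omega> \<bind> N"
  have "space \<Omega> \<noteq> {}" by (simp add: not_empty)
  have s2: "sets \<mu>2 = sets (PiM L (\<lambda>_. borel))"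
    unfolding \<mu>2_def by (rule sets_bind_measurable[OF Nm \<open>space \<Omega> \<noteq> {}\<close>])
  have eq: "\<mu>1 = \<mu>2"
  proof (rule measure_eqI_PiM_finite)
    show "finite L" using fin L_def by simp
    show "sets \<mu>1 = sets (PiM L (\<lambda>_. borel))" by (simp add: \<mu>1_def)
    show "sets \<mu>2 = sets (PiM L (\<lambda>_. borel))" by (rule s2)
    show "range (\<lambda>_::nat. space (PiM L (\<lambda>_. (borel::'d measure)))) \<subseteq> prod_algebra L (\<lambda>_. borel)"
      using space_in_prod_algebra[of L "\<lambda>_. borel"] by (simp add: space_PiM)
    show "(\<Union>i::nat. space (PiM L (\<lambda>_. (borel::'d measure)))) = space (PiM L (\<lambda>_. borel))" by simp
    show "emeasure \<mu>1 (space (PiM L (\<lambda>_. borel))) \<noteq> \<infinity>" for i::nat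
      unfolding \<mu>1_def by (simp add: emeasure_distr)
  next
    fix A assume A: "\<And>i. i \<in> L \<Longrightarrow> A i \<in> sets (borel::'d measure)"
    have AL: "Pi\<^sub>E L A \<in> sets (PiM L (\<lambda>_. (borel::'d measure)))"
      using A by (intro sets_PiM_I_finite) (auto simp: L_def fin)
    define g where "g = (\<lambda>\<omega>. (\<Prod>i\<in>J. indicator (A i) (X i \<omega>)) :: real)"
    have g01: "0 \<le> g \<omega> \<and> g \<omega> \<le> 1" for \<omega>
      unfolding g_def by (auto intro!: prod_nonneg prod_le_1 simp: indicator_def)
    have gind: "g \<omega> = indicator {\<omega>. \<forall>i\<in>J. X i \<omega> \<in> A i} \<omega>" for \<omega>
      unfolding g_def by (auto simp: indicator_def fin)
    have subalg: "subalgebra \<Omega> (gen_sigma \<Omega> X I)" by (rule gen_sigma_subalg[OF Xm])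
    interpret fms: finite_measure_subalgebra \<Omega> "gen_sigma \<Omega> X I"
      by unfold_locales (rule subalg)
    have gmF: "g \<in> borel_measurable (gen_sigma \<Omega> X I)"
      unfolding g_def
    proof (intro borel_measurable_prod)
      fix i assume "i \<in> J"
      then have Xi: "X i \<in> borel_measurable (gen_sigma \<Omega> X I)" using JI by (intro gen_sigma_meas[OF Xm]) auto
      have "A i \<in> sets borel" using A \<open>i \<in> J\<close> by (simp add: L_def)
      then show "(\<lambda>\<omega>. indicator (A i) (X i \<omega>) :: real) \<in> borel_measurable (gen_sigma \<Omega> X I)"
        using measurable_compose[OF Xi borel_measurable_indicator[OF \<open>A i \<in> sets borel\<close>]] by (simp add: comp_def)
    qed
    have gm: "g \<in> borel_measurable \<Omega>" by (rule measurable_from_subalg[OF subalg gmF])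
    have Ajb: "A j \<in> sets borel" using A by (simp add: L_def)
    have Kmeas: "(\<lambda>\<omega>. measure (K (X j0 \<omega>)) (A j)) \<in> borel_measurable \<Omega>"
      using measurable_compose[OF Kc measurable_measure_subprob_algebra[OF Ajb]] by simp
    have indm: "(\<lambda>\<omega>. indicator (A j) (X j \<omega>) :: real) \<in> borel_measurable \<Omega>"
      using Ajb Xm by measurable
    have Kle: "measure (K x) B \<le> 1" for x B
    proof -
      have "subprob_space (K x)" using measurable_space[OF K, of x] by (simp add: space_subprob_algebra)
      then show ?thesis by (rule subprob_space.subprob_measure_le_1)
    qed
    have int1: "integrable \<Omega> (\<lambda>\<omega>. g \<omega> * indicator (A j) (X j \<omega>))"
    proof (rule integrable_const_bound[where B=1])
      show "AE x in \<Omega>. norm (g x * indicator (A j) (X j x)) \<le> 1"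
        using g01 by (auto simp: indicator_def abs_mult)
    qed (intro borel_measurable_times gm indm)
    have int2: "integrable \<Omega> (\<lambda>\<omega>. g \<omega> * measure (K (X j0 \<omega>)) (A j))"
      using g01 Kle by (intro integrable_const_bound[where B=1])
         (auto simp: abs_mult intro!: gm Kmeas borel_measurable_times mult_le_one)
    have "emeasure \<mu>1 (Pi\<^sub>E L A) = emeasure \<Omega> (W -` Pi\<^sub>E L A \<inter> space \<Omega>)"
      unfolding \<mu>1_def using AL by (simp add: emeasure_distr)
    also have "\<dots> = (\<integral>\<^sup>+\<omega>. ennreal (g \<omega> * indicator (A j) (X j \<omega>)) \<partial>\<Omega>)"
    proof -
      have "W -` Pi\<^sub>E L A \<inter> space \<Omega> \<in> sets \<Omega>" using AL Wm by measurable
      moreover have "indicator (W -` Pi\<^sub>E L A \<inter> space \<Omega>) \<omega> = ennreal (g \<omega> * indicator (A j) (X j \<omega>))"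
        if "\<omega> \<in> space \<Omega>" for \<omega>
        using that by (auto simp: gind W_def L_def indicator_def PiE_def Pi_iff)
      ultimately show ?thesis by (simp add: nn_integral_indicator[symmetric] cong: nn_integral_cong)
    qed
    also have "\<dots> = ennreal (\<integral>\<omega>. g \<omega> * indicator (A j) (X j \<omega>) \<partial>\<Omega>)"
      using int1 g01 by (intro nn_integral_eq_integral) auto
    also have "(\<integral>\<omega>. g \<omega> * indicator (A j) (X j \<omega>) \<partial>\<Omega>)
        = (\<integral>\<omega>. g \<omega> * real_cond_exp \<Omega> (gen_sigma \<Omega> X I) (\<lambda>\<omega>. indicator (A j) (X j \<omega>)) \<omega> \<partial>\<Omega>)"
      using fms.real_cond_exp_intg(2)[OF int1 gmF indm] by simp
    also have "\<dots> = (\<integral>\<omega>. g \<omega> * measure (K (X j0 \<omega>)) (A j) \<partial>\<Omega>)"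
      using cond Ajb by (intro integral_cong_AE) (auto elim!: AE_mp intro!: gm Kmeas borel_measurable_times borel_measurable_cond_exp2)
    also have "ennreal \<dots> = (\<integral>\<^sup>+\<omega>. ennreal (g \<omega> * measure (K (X j0 \<omega>)) (A j)) \<partial>\<Omega>)"
      using int2 g01 by (intro nn_integral_eq_integral[symmetric]) auto
    also have "\<dots> = (\<integral>\<^sup>+\<omega>. emeasure (N \<omega>) (Pi\<^sub>E L A) \<partial>\<Omega>)"
    proof (rule nn_integral_cong)
      fix \<omega> assume "\<omega> \<in> space \<Omega>"
      have "emeasure (N \<omega>) (Pi\<^sub>E L A) = emeasure (K (X j0 \<omega>)) (U \<omega> -` Pi\<^sub>E L A \<inter> space (K (X j0 \<omega>)))"
        unfolding N_def using AL Um1 by (simp add: emeasure_distr)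
      also have "U \<omega> -` Pi\<^sub>E L A \<inter> space (K (X j0 \<omega>)) = (if (\<forall>i\<in>J. X i \<omega> \<in> A i) then A j else {})"
        using jJ by (auto simp: U_def L_def Kspace PiE_def Pi_iff split: if_splits; metis)
      finally show "ennreal (g \<omega> * measure (K (X j0 \<omega>)) (A j)) = emeasure (N \<omega>) (Pi\<^sub>E L A)"
        using finite_measure.emeasure_eq_measure[OF Kfin] by (simp add: gind indicator_def)
    qed
    also have "\<dots> = emeasure \<mu>2 (Pi\<^sub>E L A)"
      unfolding \<mu>2_def using AL by (rule emeasure_bind[OF \<open>space \<Omega> \<noteq> {}\<close> Nm, symmetric])
    finally show "emeasure \<mu>1 (Pi\<^sub>E L A) = emeasure \<mu>2 (Pi\<^sub>E L A)" .
  qed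
  have F': "F \<in> borel_measurable (PiM L (\<lambda>_. borel))" using F L_def by simp
  have "(\<integral>\<^sup>+\<omega>. F (W \<omega>) \<partial>\<Omega>) = (\<integral>\<^sup>+w. F w \<partial>\<mu>1)"
    unfolding \<mu>1_def using F' by (simp add: nn_integral_distr[OF Wm])
  also have "\<dots> = (\<integral>\<^sup>+w. F w \<partial>\<mu>2)" by (simp add: eq)
  also have "\<dots> = (\<integral>\<^sup>+\<omega>. \<integral>\<^sup>+w. F w \<partial>N \<omega> \<partial>\<Omega>)"
    unfolding \<mu>2_def by (rule nn_integral_bind[OF F' Nm])
  also have "\<dots> = (\<integral>\<^sup>+\<omega>. \<integral>\<^sup>+y. F (U \<omega> y) \<partial>K (X j0 \<omega>) \<partial>\<Omega>)"
    unfolding N_def using F' by (intro nn_integral_cong) (simp add: nn_integral_distr[OF Um1])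
  finally show ?thesis unfolding L_def[symmetric] using WU by (simp add: W_def)
qed



lemma tk_alt:
  "tail_kernel \<kappa> x = distr (if x = 0 then return borel 0 else \<kappa> (x /\<^sub>R norm x)) borel (\<lambda>y. norm x *\<^sub>R y)"
  by (simp add: tail_kernel_def distr_return)

lemma tk_meas:
  fixes \<kappa> :: "'d::euclidean_space \<Rightarrow> 'd measure"
  assumes "\<kappa> \<in> borel \<rightarrow>\<^sub>M prob_algebra borel"
  shows "tail_kernel \<kappa> \<in> borel \<rightarrow>\<^sub>M subprob_algebra borel"
proof -
  have k: "\<kappa> \<in> borel \<rightarrow>\<^sub>M subprob_algebra borel" using assms by (rule measurable_prob_algebraD)
  have r: "return borel (0::'d) \<in> space (subprob_algebra borel)"
    by (simp add: space_subprob_algebra prob_space_return prob_space_imp_subprob_space)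
  have k': "(\<lambda>x::'d. if x = 0 then return borel 0 else \<kappa> (x /\<^sub>R norm x)) \<in> borel \<rightarrow>\<^sub>M subprob_algebra borel"
    by (intro measurable_If measurable_const[OF r] measurable_compose[OF _ k]) auto
  have f: "(\<lambda>(x::'d, y::'d). norm x *\<^sub>R y) \<in> borel \<Otimes>\<^sub>M borel \<rightarrow>\<^sub>M borel" by measurable
  show ?thesis unfolding tk_alt[abs_def] by (rule measurable_distr2[OF f k'])
qed

lemma tk_zero: "tail_kernel \<kappa> 0 = return borel 0"
  by (simp add: tail_kernel_def)

lemma tk_sets:
  assumes "\<kappa> \<in> borel \<rightarrow>\<^sub>M prob_algebra borel"
  shows "sets (tail_kernel \<kappa> x) = sets borel"
  using subprob_measurableD(2)[OF tk_meas[OF assms], of x] by simp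

lemma tk_hom:
  fixes \<kappa> :: "'d::euclidean_space \<Rightarrow> 'd measure"
  assumes k: "\<kappa> \<in> borel \<rightarrow>\<^sub>M prob_algebra borel" and r: "r > 0"
    and h: "h \<in> borel_measurable borel"
  shows "(\<integral>\<^sup>+y. h y \<partial>tail_kernel \<kappa> (x /\<^sub>R r)) = (\<integral>\<^sup>+z. h (z /\<^sub>R r) \<partial>tail_kernel \<kappa> x)"
proof (cases "x = 0")
  case True
  then show ?thesis using h by (simp add: tk_zero nn_integral_return)
next
  case False
  have ks: "sets (\<kappa> u) = sets borel" for u
    using subprob_measurableD(2)[OF measurable_prob_algebraD[OF k], of u] by simp
  have m1: "(\<lambda>y. c *\<^sub>R y) \<in> \<kappa> u \<rightarrow>\<^sub>M borel" for c u
    unfolding measurable_cong_sets[OF ks refl] by simp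
  have d: "integral\<^sup>N (distr (\<kappa> u) borel (\<lambda>y. c *\<^sub>R y)) g = (\<integral>\<^sup>+y. g (c *\<^sub>R y) \<partial>\<kappa> u)"
    if g: "g \<in> borel_measurable borel" for c u g
    by (rule nn_integral_distr[OF m1]) (use g in simp)
  have hr: "(\<lambda>z. h (z /\<^sub>R r)) \<in> borel_measurable borel" using h by measurable
  have xr: "x /\<^sub>R r \<noteq> 0" using False r by simp
  have n: "(x /\<^sub>R r) /\<^sub>R norm (x /\<^sub>R r) = x /\<^sub>R norm x" using r by simp
  have "(\<integral>\<^sup>+y. h y \<partial>tail_kernel \<kappa> (x /\<^sub>R r)) = (\<integral>\<^sup>+y. h (norm (x /\<^sub>R r) *\<^sub>R y) \<partial>\<kappa> (x /\<^sub>R norm x))"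
  proof -
    have "tail_kernel \<kappa> (x /\<^sub>R r) = distr (\<kappa> (x /\<^sub>R norm x)) borel (\<lambda>y. norm (x /\<^sub>R r) *\<^sub>R y)"
      unfolding tail_kernel_def if_not_P[OF xr] n by (rule refl)
    then show ?thesis by (simp only: d[OF h])
  qed
  also have "\<dots> = (\<integral>\<^sup>+y. h ((norm x *\<^sub>R y) /\<^sub>R r) \<partial>\<kappa> (x /\<^sub>R norm x))"
    using r by (intro nn_integral_cong) simp
  also have "\<dots> = (\<integral>\<^sup>+z. h (z /\<^sub>R r) \<partial>tail_kernel \<kappa> x)"
    unfolding tail_kernel_def if_not_P[OF False] d[OF hr] by (rule refl)
  finally show ?thesis .
qed



definition "Dset = (sphere (0::'d::euclidean_space) 1 \<times> (UNIV - {0::'d}))"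
definition "Tmap = (\<lambda>p::'d::euclidean_space \<times> 'd. (snd p /\<^sub>R norm (snd p), fst p /\<^sub>R norm (snd p)))"

lemma Dset_borel[measurable]: "Dset \<in> sets borel"
proof -
  have "Dset = (sphere (0::'a) 1 \<times> (UNIV - {0::'a}))" by (simp add: Dset_def)
  moreover have "sphere (0::'a) 1 \<times> (UNIV - {0::'a}) \<in> sets (borel \<Otimes>\<^sub>M borel)"
    by (intro pair_measureI) auto
  ultimately show ?thesis by (metis borel_prod)
qed

lemma fst_bm[measurable]: "fst \<in> (borel :: ('a::euclidean_space \<times> 'b::euclidean_space) measure) \<rightarrow>\<^sub>M borel"
  unfolding borel_prod[symmetric] by measurable
lemma snd_bm[measurable]: "snd \<in> (borel :: ('a::euclidean_space \<times> 'b::euclidean_space) measure) \<rightarrow>\<^sub>M borel"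
  unfolding borel_prod[symmetric] by measurable
lemma pair_bm: "f \<in> M \<rightarrow>\<^sub>M borel \<Longrightarrow> g \<in> M \<rightarrow>\<^sub>M borel \<Longrightarrow>
  (\<lambda>x. (f x, g x)) \<in> M \<rightarrow>\<^sub>M (borel :: ('a::euclidean_space \<times> 'b::euclidean_space) measure)"
  unfolding borel_prod[symmetric] by measurable

lemma Tmap_meas[measurable]: "Tmap \<in> borel_measurable borel"
  unfolding Tmap_def by (intro pair_bm) measurable

lemma adjoint_fun:
  fixes P Q :: "('d::euclidean_space \<times> 'd) measure"
  assumes sP: "sets P = sets borel" and sQ: "sets Q = sets borel" and adj: "is_adjoint \<alpha> P Q"
    and \<phi>: "\<phi> \<in> borel_measurable borel"
  shows "(\<integral>\<^sup>+p. \<phi> p * indicator Dset p \<partial>Q)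
       = (\<integral>\<^sup>+p. indicator Dset p * \<phi> (Tmap p) * ennreal (norm (snd p) powr \<alpha>) \<partial>P)"
proof -
  define w where "w = (\<lambda>p::'d \<times> 'd. indicator Dset p * ennreal (norm (snd p) powr \<alpha>))"
  have wm: "w \<in> borel_measurable borel" unfolding w_def by measurable
  have spP: "space P = UNIV" using sets_eq_imp_space_eq[OF sP] by simp
  have Tm: "Tmap \<in> density P w \<rightarrow>\<^sub>M borel"
    using Tmap_meas measurable_cong_sets[of "density P w" borel borel borel] sP by simp
  define \<nu>1 where "\<nu>1 = density Q (indicator Dset)"
  define \<nu>2 where "\<nu>2 = distr (density P w) borel Tmap"
  have TD: "Tmap p \<in> Dset" if "p \<in> Dset" for p
    using that by (auto simp: Dset_def Tmap_def)
  have eq: "\<nu>1 = \<nu>2"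
  proof (rule measure_eqI)
    show "sets \<nu>1 = sets \<nu>2" by (simp add: \<nu>1_def \<nu>2_def sQ)
  next
    fix E assume "E \<in> sets \<nu>1"
    then have E: "E \<in> sets borel" by (simp add: \<nu>1_def sQ)
    have ED: "E \<inter> Dset \<in> sets borel" using E by simp
    have "emeasure \<nu>1 E = emeasure Q (E \<inter> Dset)"
      unfolding \<nu>1_def using E sQ by (subst emeasure_restricted) (auto simp: Int_commute)
    also have "\<dots> = (\<integral>\<^sup>+sm. indicator Dset sm * indicator (E \<inter> Dset) (Tmap sm)
                  * ennreal (norm (snd sm) powr \<alpha>) \<partial>P)"
      using adj ED unfolding is_adjoint_def Dset_def Tmap_def by auto
    also have "\<dots> = (\<integral>\<^sup>+p. w p * indicator (Tmap -` E \<inter> space (density P w)) p \<partial>P)"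
    proof (intro nn_integral_cong)
      fix p assume "p \<in> space P"
      show "indicator Dset p * indicator (E \<inter> Dset) (Tmap p) * ennreal (norm (snd p) powr \<alpha>) =
          w p * indicator (Tmap -` E \<inter> space (density P w)) p"
        using TD[of p] spP unfolding w_def by (cases "p \<in> Dset"; cases "Tmap p \<in> E") (simp_all add: indicator_def)
    qed
    also have "\<dots> = emeasure \<nu>2 E"
      unfolding \<nu>2_def using E Tm wm sP by (simp add: emeasure_distr emeasure_density)
    finally show "emeasure \<nu>1 E = emeasure \<nu>2 E" .
  qed
  have \<phi>Q: "\<phi> \<in> borel_measurable Q" using \<phi> measurable_cong_sets[of Q borel borel borel] sQ by simp
  have \<phi>P: "(\<lambda>p. \<phi> (Tmap p)) \<in> borel_measurable P"
    using measurable_compose[OF Tmap_meas \<phi>] measurable_cong_sets[of P borel borel borel] sP by simp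
  have DQ: "indicator Dset \<in> borel_measurable Q"
    using borel_measurable_indicator[OF Dset_borel] measurable_cong_sets[of Q borel borel borel] sQ by simp
  have wP: "w \<in> borel_measurable P" using wm measurable_cong_sets[of P borel borel borel] sP by simp
  have "(\<integral>\<^sup>+p. \<phi> p * indicator Dset p \<partial>Q) = (\<integral>\<^sup>+p. indicator Dset p * \<phi> p \<partial>Q)"
    by (simp only: mult.commute)
  also have "\<dots> = (\<integral>\<^sup>+p. \<phi> p \<partial>\<nu>1)"
    unfolding \<nu>1_def by (rule nn_integral_density[OF DQ \<phi>Q, symmetric])
  also have "\<dots> = (\<integral>\<^sup>+p. \<phi> p \<partial>\<nu>2)" by (simp only: eq)
  also have "\<dots> = (\<integral>\<^sup>+p. \<phi> (Tmap p) \<partial>density P w)"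
    unfolding \<nu>2_def by (rule nn_integral_distr[OF Tm]) (simp add: \<phi>)
  also have "\<dots> = (\<integral>\<^sup>+p. w p * \<phi> (Tmap p) \<partial>P)"
    by (rule nn_integral_density[OF wP \<phi>P])
  also have "\<dots> = (\<integral>\<^sup>+p. indicator Dset p * \<phi> (Tmap p) * ennreal (norm (snd p) powr \<alpha>) \<partial>P)"
    by (intro nn_integral_cong) (simp only: w_def mult_ac)
  finally show ?thesis .
qed



lemma upd_meas:
  fixes j :: int and L :: "int set"
  shows "(\<lambda>p. (fst p)(j := snd p)) \<in> PiM L (\<lambda>_. borel) \<Otimes>\<^sub>M (borel::'d::euclidean_space measure) \<rightarrow>\<^sub>M PiM (insert j L) (\<lambda>_. borel)"
proof -
  have "(\<lambda>p i. (\<lambda>i p. if i = j then snd p else fst p i) i p) \<in> PiM L (\<lambda>_. borel) \<Otimes>\<^sub>M (borel::'d measure) \<rightarrow>\<^sub>M PiM (insert j L) (\<lambda>_. borel)"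
  proof (rule measurable_PiM_single')
    fix i assume "i \<in> insert j L"
    then show "(\<lambda>p. if i = j then snd p else fst p i) \<in> PiM L (\<lambda>_. borel) \<Otimes>\<^sub>M (borel::'d measure) \<rightarrow>\<^sub>M borel"
      by (cases "i = j") (auto intro!: measurable_compose[OF measurable_fst measurable_component_singleton])
  next
    show "(\<lambda>p i. if i = j then snd p else fst p i) \<in> space (PiM L (\<lambda>_. borel) \<Otimes>\<^sub>M (borel::'d measure)) \<rightarrow> (\<Pi>\<^sub>E i\<in>insert j L. space borel)"
      by (auto simp: space_pair_measure space_PiM PiE_def extensional_def)
  qed
  moreover have "(\<lambda>p i. (\<lambda>i p. if i = j then snd p else fst p i) i p) = (\<lambda>p::(int \<Rightarrow> 'd) \<times> 'd. (fst p)(j := snd p))"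
    by (auto simp: fun_eq_iff)
  ultimately show ?thesis by simp
qed

lemma upd_meas1:
  fixes j :: int and L :: "int set"
  assumes "w \<in> space (PiM L (\<lambda>_. borel))"
  shows "(\<lambda>y. w(j := y)) \<in> (borel::'d::euclidean_space measure) \<rightarrow>\<^sub>M PiM (insert j L) (\<lambda>_. borel)"
  using measurable_compose[OF measurable_Pair[OF measurable_const[OF assms] measurable_ident_sets[OF refl]] upd_meas[of j L]]
  by simp

lemma shift_meas:
  fixes L L' :: "int set"
  assumes "\<And>i. i \<in> L' \<Longrightarrow> i + c \<in> L" and "k \<in> L"
  shows "(\<lambda>w. \<lambda>i\<in>L'. w (i + c) /\<^sub>R norm (w k)) \<in> PiM L (\<lambda>_. borel) \<rightarrow>\<^sub>M PiM L' (\<lambda>_. (borel::'d::euclidean_space measure))"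
proof (intro measurable_restrict)
  fix i assume "i \<in> L'"
  then have "i + c \<in> L" by (rule assms(1))
  then show "(\<lambda>w. w (i + c) /\<^sub>R norm (w k)) \<in> PiM L (\<lambda>_. borel) \<rightarrow>\<^sub>M (borel::'d measure)"
    using assms(2) by measurable
qed

lemma kint_meas:
  fixes j k :: int and L :: "int set"
  assumes F: "F \<in> borel_measurable (PiM (insert j L) (\<lambda>_. (borel::'d::euclidean_space measure)))"
    and K: "K \<in> borel \<rightarrow>\<^sub>M subprob_algebra (borel::'d measure)" and k: "k \<in> L"
  shows "(\<lambda>w. \<integral>\<^sup>+y. F (w(j := y)) \<partial>K (w k)) \<in> borel_measurable (PiM L (\<lambda>_. borel))"
proof (rule nn_integral_measurable_subprob_algebra2)
  show "(\<lambda>(w, y). F (w(j := y))) \<in> borel_measurable (PiM L (\<lambda>_. borel) \<Otimes>\<^sub>M borel)"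
    using measurable_compose[OF upd_meas[of j L] F] by (simp add: case_prod_beta')
  show "(\<lambda>w. K (w k)) \<in> PiM L (\<lambda>_. borel) \<rightarrow>\<^sub>M subprob_algebra borel"
    using measurable_compose[OF measurable_component_singleton[OF k] K] by simp
qed

definition TC :: "real \<Rightarrow> 'a measure \<Rightarrow> (int \<Rightarrow> 'a \<Rightarrow> 'd::euclidean_space) \<Rightarrow> nat \<Rightarrow> nat \<Rightarrow> bool" where
  "TC \<alpha> \<Omega> X s t \<longleftrightarrow> (\<forall>F::(int \<Rightarrow> 'd) \<Rightarrow> ennreal.
     F \<in> borel_measurable (PiM {- int s..int t} (\<lambda>_. borel)) \<longrightarrow>
     (\<forall>y\<in>space (PiM {- int s..int t} (\<lambda>_. (borel::'d measure))). y (- int s) = 0 \<longrightarrow> F y = 0) \<longrightarrow>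
     (\<integral>\<^sup>+\<omega>. F (\<lambda>i\<in>{- int s..int t}. X i \<omega>) \<partial>\<Omega>)
     = (\<integral>\<^sup>+\<omega>. F (\<lambda>i\<in>{- int s..int t}. X (i + int s) \<omega> /\<^sub>R norm (X (int s) \<omega>))
          * ennreal (norm (X (int s) \<omega>) powr \<alpha>) * indicator {\<omega>. X (int s) \<omega> \<noteq> 0} \<omega> \<partial>\<Omega>))"

locale btc =
  fixes \<alpha> :: real and \<Omega> :: "'a measure" and M :: "int \<Rightarrow> 'a \<Rightarrow> 'd::euclidean_space"
    and \<kappa>f \<kappa>b :: "'d \<Rightarrow> 'd measure"
  assumes alpha: "\<alpha> > 0"
    and prob: "prob_space \<Omega>"
    and Mm: "\<And>t. M t \<in> borel_measurable \<Omega>"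
    and Pin: "in_M_alpha \<alpha> (distr \<Omega> borel (\<lambda>\<omega>. (M 0 \<omega>, M 1 \<omega>)))"
    and Qin: "in_M_alpha \<alpha> (distr \<Omega> borel (\<lambda>\<omega>. (M 0 \<omega>, M (-1) \<omega>)))"
    and adjPQ: "is_adjoint \<alpha> (distr \<Omega> borel (\<lambda>\<omega>. (M 0 \<omega>, M 1 \<omega>))) (distr \<Omega> borel (\<lambda>\<omega>. (M 0 \<omega>, M (-1) \<omega>)))"
    and kf: "cond_law_kernel \<Omega> (M 0) (M 1) \<kappa>f"
    and fwd: "\<forall>t::int \<ge> 1. \<forall>B \<in> sets borel. AE \<omega> in \<Omega>.
           real_cond_exp \<Omega> (gen_sigma \<Omega> M {..t - 1}) (\<lambda>\<omega>. indicator B (M t \<omega>)) \<omega>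
           = measure (tail_kernel \<kappa>f (M (t - 1) \<omega>)) B"
    and kb: "cond_law_kernel \<Omega> (M 0) (M (-1)) \<kappa>b"
    and bwd: "\<forall>t::int \<ge> 1. \<forall>B \<in> sets borel. AE \<omega> in \<Omega>.
           real_cond_exp \<Omega> (gen_sigma \<Omega> M {-(t - 1)..}) (\<lambda>\<omega>. indicator B (M (-t) \<omega>)) \<omega>
           = measure (tail_kernel \<kappa>b (M (-t + 1) \<omega>)) B"
begin

lemma Kf: "tail_kernel \<kappa>f \<in> borel \<rightarrow>\<^sub>M subprob_algebra borel"
  using kf by (intro tk_meas) (simp add: cond_law_kernel_def)
lemma Kb: "tail_kernel \<kappa>b \<in> borel \<rightarrow>\<^sub>M subprob_algebra borel"
  using kb by (intro tk_meas) (simp add: cond_law_kernel_def)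
lemma kfm: "\<kappa>f \<in> borel \<rightarrow>\<^sub>M prob_algebra borel" using kf by (simp add: cond_law_kernel_def)
lemma kbm: "\<kappa>b \<in> borel \<rightarrow>\<^sub>M prob_algebra borel" using kb by (simp add: cond_law_kernel_def)

lemma fwd_step:
  fixes a t :: int
  assumes "a \<le> t" "0 \<le> t"
    and F: "F \<in> borel_measurable (PiM {a..t+1} (\<lambda>_. borel))"
  shows "(\<integral>\<^sup>+\<omega>. F (\<lambda>i\<in>{a..t+1}. M i \<omega>) \<partial>\<Omega>)
       = (\<integral>\<^sup>+\<omega>. \<integral>\<^sup>+y. F ((\<lambda>i\<in>{a..t+1}. M i \<omega>)(t+1 := y)) \<partial>tail_kernel \<kappa>f (M t \<omega>) \<partial>\<Omega>)"
proof -
  have L: "insert (t+1) {a..t} = {a..t+1}" using assms by auto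
  have c: "\<forall>B\<in>sets borel. AE \<omega> in \<Omega>. real_cond_exp \<Omega> (gen_sigma \<Omega> M {..t}) (\<lambda>\<omega>. indicator B (M (t+1) \<omega>)) \<omega>
      = measure (tail_kernel \<kappa>f (M t \<omega>)) B"
    using fwd[rule_format, of "t+1"] assms by simp
  show ?thesis
    using markov_step[where X=M and J="{a..t}" and I="{..t}" and j="t+1" and j0=t and K="tail_kernel \<kappa>f" and F=F, OF prob Mm] assms c Kf F
    unfolding L by auto
qed

lemma bwd_step:
  fixes a b :: int
  assumes "a \<le> -1" "a < b"
    and F: "F \<in> borel_measurable (PiM {a..b} (\<lambda>_. borel))"
  shows "(\<integral>\<^sup>+\<omega>. F (\<lambda>i\<in>{a..b}. M i \<omega>) \<partial>\<Omega>)
       = (\<integral>\<^sup>+\<omega>. \<integral>\<^sup>+y. F ((\<lambda>i\<in>{a..b}. M i \<omega>)(a := y)) \<partial>tail_kernel \<kappa>b (M (a+1) \<omega>) \<partial>\<Omega>)"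
proof -
  have L: "insert a {a+1..b} = {a..b}" using assms by auto
  have c: "\<forall>B\<in>sets borel. AE \<omega> in \<Omega>. real_cond_exp \<Omega> (gen_sigma \<Omega> M {a+1..}) (\<lambda>\<omega>. indicator B (M a \<omega>)) \<omega>
      = measure (tail_kernel \<kappa>b (M (a+1) \<omega>)) B"
    using bwd[rule_format, of "-a"] assms by (simp add: add.commute)
  show ?thesis
    using markov_step[where X=M and J="{a+1..b}" and I="{a+1..}" and j=a and j0="a+1" and K="tail_kernel \<kappa>b" and F=F, OF prob Mm] assms c Kb F
    unfolding L by auto
qed

lemma Ksets: "sets (tail_kernel \<kappa>f x) = sets borel" "sets (tail_kernel \<kappa>b x) = sets borel"
  using tk_sets[OF kfm] tk_sets[OF kbm] by auto

lemma Kmeas_cong: "(g \<in> borel_measurable (tail_kernel \<kappa>f x)) = (g \<in> borel_measurable borel)"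
   "(g \<in> borel_measurable (tail_kernel \<kappa>b x)) = (g \<in> borel_measurable borel)"
  by (simp_all only: measurable_cong_sets[OF Ksets(1) refl] measurable_cong_sets[OF Ksets(2) refl])

lemma TC_succ:
  assumes IH: "TC \<alpha> \<Omega> M s t"
  shows "TC \<alpha> \<Omega> M s (Suc t)"
  unfolding TC_def
proof (intro allI impI)
  fix F :: "(int \<Rightarrow> 'd) \<Rightarrow> ennreal"
  define a where "a = - int s"
  define T where "T = int t"
  define S where "S = int s + T"
  define L0 where "L0 = {a..T}"
  define L1 where "L1 = {a..T+1}"
  define K where "K = tail_kernel \<kappa>f"
  have sT: "int (Suc t) = T + 1" by (simp add: T_def)
  have aT: "a \<le> T" "0 \<le> T" by (auto simp: a_def T_def)
  have L01: "insert (T+1) L0 = L1" using aT by (auto simp: L0_def L1_def)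
  assume Fm: "F \<in> borel_measurable (PiM {- int s..int (Suc t)} (\<lambda>_. borel))"
  assume Fv: "\<forall>y\<in>space (PiM {- int s..int (Suc t)} (\<lambda>_. (borel::'d measure))). y (- int s) = 0 \<longrightarrow> F y = 0"
  have Fm1: "F \<in> borel_measurable (PiM L1 (\<lambda>_. borel))" using Fm by (simp only: sT L1_def a_def)
  have Fv1: "\<And>y. y \<in> space (PiM L1 (\<lambda>_. (borel::'d measure))) \<Longrightarrow> y a = 0 \<Longrightarrow> F y = 0"
    using Fv by (simp only: sT L1_def a_def)
  define F' where "F' = (\<lambda>w. \<integral>\<^sup>+y. F (w(T+1 := y)) \<partial>K (w T))"
  have F'm: "F' \<in> borel_measurable (PiM L0 (\<lambda>_. borel))"
    unfolding F'_def K_def using Fm1 L01 aT by (intro kint_meas Kf) (auto simp: L0_def)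
  have F'v: "\<forall>y\<in>space (PiM {- int s..int t} (\<lambda>_. (borel::'d measure))). y (- int s) = 0 \<longrightarrow> F' y = 0"
  proof (intro ballI impI)
    fix y assume y: "y \<in> space (PiM {- int s..int t} (\<lambda>_. (borel::'d measure)))" and y0: "y (- int s) = 0"
    have "F (y(T+1 := z)) = 0" for z
    proof (rule Fv1)
      show "y(T + 1 := z) \<in> space (PiM L1 (\<lambda>_. borel))"
        using y L01 by (auto simp: space_PiM PiE_def extensional_def L0_def a_def T_def)
      show "(y(T + 1 := z)) a = 0" using y0 aT by (simp add: a_def T_def)
    qed
    then show "F' y = 0" by (simp add: F'_def)
  qed
  define W0 where "W0 = (\<lambda>\<omega>. \<lambda>i\<in>L0. M i \<omega>)"
  define W1 where "W1 = (\<lambda>\<omega>. \<lambda>i\<in>L1. M i \<omega>)"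
  define W2 where "W2 = (\<lambda>\<omega>. \<lambda>i\<in>{0..S+1}. M i \<omega>)"
  define r where "r = (\<lambda>\<omega>. norm (M (int s) \<omega>))"
  define N0 where "N0 = (\<lambda>\<omega>. \<lambda>i\<in>L0. M (i + int s) \<omega> /\<^sub>R r \<omega>)"
  define N1 where "N1 = (\<lambda>\<omega>. \<lambda>i\<in>L1. M (i + int s) \<omega> /\<^sub>R r \<omega>)"
  define G where "G = (\<lambda>w. F (\<lambda>i\<in>L1. w (i + int s) /\<^sub>R norm (w (int s)))
      * ennreal (norm (w (int s)) powr \<alpha>) * indicator {w. w (int s) \<noteq> 0} w)"
  have Gm: "G \<in> borel_measurable (PiM {0..S+1} (\<lambda>_. borel))"
  proof -
    have sm: "(\<lambda>w. \<lambda>i\<in>L1. w (i + int s) /\<^sub>R norm (w (int s))) \<in> PiM {0..S+1} (\<lambda>_. borel) \<rightarrow>\<^sub>M PiM L1 (\<lambda>_. (borel::'d measure))"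
      by (rule shift_meas) (auto simp: L1_def a_def S_def T_def)
    have cm: "(\<lambda>w. w (int s)) \<in> PiM {0..S+1} (\<lambda>_. borel) \<rightarrow>\<^sub>M (borel::'d measure)"
      by (rule measurable_component_singleton) (auto simp: S_def T_def)
    have im: "(\<lambda>w. indicator {w. w (int s) \<noteq> (0::'d)} w :: ennreal) \<in> borel_measurable (PiM {0..S+1} (\<lambda>_. borel))"
    proof -
      have "(\<lambda>w::int\<Rightarrow>'d. indicator {w. w (int s) \<noteq> (0::'d)} w :: ennreal) = (\<lambda>w. indicator (- {0}) (w (int s)))"
        by (auto simp: indicator_def fun_eq_iff)
      moreover have "(\<lambda>w. indicator (- {0::'d}) (w (int s)) :: ennreal) \<in> borel_measurable (PiM {0..S+1} (\<lambda>_. borel))"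
        using measurable_compose[OF cm borel_measurable_indicator[of "- {0::'d}" borel]] by simp
      ultimately show ?thesis by simp
    qed
    show ?thesis unfolding G_def
      using measurable_compose[OF sm Fm1] cm im by measurable
  qed
  have "(\<integral>\<^sup>+\<omega>. F (W1 \<omega>) \<partial>\<Omega>) = (\<integral>\<^sup>+\<omega>. \<integral>\<^sup>+y. F ((W1 \<omega>)(T+1 := y)) \<partial>K (M T \<omega>) \<partial>\<Omega>)"
    unfolding W1_def L1_def K_def by (rule fwd_step[OF aT]) (use Fm1 in \<open>simp add: L1_def\<close>)
  also have "\<dots> = (\<integral>\<^sup>+\<omega>. F' (W0 \<omega>) \<partial>\<Omega>)"
  proof (intro nn_integral_cong)
    fix \<omega>
    have "(W1 \<omega>)(T+1 := y) = (W0 \<omega>)(T+1 := y)" for y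
      by (auto simp: W0_def W1_def L0_def L1_def fun_eq_iff)
    moreover have "W0 \<omega> T = M T \<omega>" using aT by (simp add: W0_def L0_def)
    ultimately show "(\<integral>\<^sup>+y. F ((W1 \<omega>)(T+1 := y)) \<partial>K (M T \<omega>)) = F' (W0 \<omega>)"
      by (simp add: F'_def)
  qed
  also have "\<dots> = (\<integral>\<^sup>+\<omega>. F' (N0 \<omega>) * ennreal (r \<omega> powr \<alpha>) * indicator {\<omega>. M (int s) \<omega> \<noteq> 0} \<omega> \<partial>\<Omega>)"
    using IH[unfolded TC_def, THEN spec[of _ F'], THEN mp, OF F'm[unfolded L0_def a_def T_def], THEN mp, OF F'v]
    by (simp add: W0_def N0_def r_def L0_def a_def T_def)
  also have "\<dots> = (\<integral>\<^sup>+\<omega>. \<integral>\<^sup>+z. G ((W2 \<omega>)(S+1 := z)) \<partial>K (M S \<omega>) \<partial>\<Omega>)"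
  proof (intro nn_integral_cong)
    fix \<omega>
    have sS: "int s \<noteq> S + 1" using aT by (simp add: S_def)
    have W2s: "((W2 \<omega>)(S+1 := z)) (int s) = M (int s) \<omega>" for z
      using sS aT by (simp add: W2_def S_def)
    show "F' (N0 \<omega>) * ennreal (r \<omega> powr \<alpha>) * indicator {\<omega>. M (int s) \<omega> \<noteq> 0} \<omega>
        = (\<integral>\<^sup>+z. G ((W2 \<omega>)(S+1 := z)) \<partial>K (M S \<omega>))"
    proof (cases "M (int s) \<omega> = 0")
      case True
      have "G ((W2 \<omega>)(S+1 := z)) = 0" for z
      proof -
        have "indicator {w. w (int s) \<noteq> 0} ((W2 \<omega>)(S+1 := z)) = (0::ennreal)"
          by (simp only: indicator_def mem_Collect_eq W2s True) simp
        then show ?thesis unfolding G_def by simp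
      qed
      then show ?thesis using True by simp
    next
      case False
      then have rpos: "r \<omega> > 0" by (simp add: r_def)
      have N0sp: "N0 \<omega> \<in> space (PiM L0 (\<lambda>_. borel))" by (simp add: N0_def space_PiM)
      have hm: "(\<lambda>y. F ((N0 \<omega>)(T+1 := y))) \<in> borel_measurable borel"
        using measurable_compose[OF upd_meas1[OF N0sp, of "T+1"] Fm1[folded L01]] .
      have N0T: "N0 \<omega> T = M S \<omega> /\<^sub>R r \<omega>" using aT by (simp add: N0_def L0_def S_def add.commute)
      have "F' (N0 \<omega>) = (\<integral>\<^sup>+z. F ((N0 \<omega>)(T+1 := z /\<^sub>R r \<omega>)) \<partial>K (M S \<omega>))"
        unfolding F'_def N0T K_def by (rule tk_hom[OF kfm rpos hm])
      moreover have "G ((W2 \<omega>)(S+1 := z)) = F ((N0 \<omega>)(T+1 := z /\<^sub>R r \<omega>)) * ennreal (r \<omega> powr \<alpha>)" for z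
      proof -
        define w' where "w' = (W2 \<omega>)(S+1 := z)"
        have ws: "w' (int s) = M (int s) \<omega>" unfolding w'_def by (rule W2s)
        have wf: "(\<lambda>i\<in>L1. w' (i + int s) /\<^sub>R norm (M (int s) \<omega>)) = (N0 \<omega>)(T+1 := z /\<^sub>R r \<omega>)"
          unfolding w'_def using aT by (auto simp: fun_eq_iff W2_def N0_def L0_def L1_def S_def r_def a_def)
        have "G w' = F ((N0 \<omega>)(T+1 := z /\<^sub>R r \<omega>)) * ennreal (r \<omega> powr \<alpha>)"
          by (simp only: G_def ws wf indicator_def mem_Collect_eq) (simp add: False r_def)
        then show ?thesis by (simp only: w'_def)
      qed
      moreover have "(\<lambda>z. F ((N0 \<omega>)(T+1 := z /\<^sub>R r \<omega>))) \<in> borel_measurable (K (M S \<omega>))"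
        unfolding K_def Kmeas_cong using hm by measurable
      ultimately show ?thesis using False
        by (simp add: nn_integral_multc r_def)
    qed
  qed
  also have "\<dots> = (\<integral>\<^sup>+\<omega>. G (W2 \<omega>) \<partial>\<Omega>)"
    unfolding W2_def K_def using fwd_step[of 0 S G] Gm aT by (simp add: S_def)
  also have "\<dots> = (\<integral>\<^sup>+\<omega>. F (N1 \<omega>) * ennreal (r \<omega> powr \<alpha>) * indicator {\<omega>. M (int s) \<omega> \<noteq> 0} \<omega> \<partial>\<Omega>)"
  proof (intro nn_integral_cong)
    fix \<omega>
    have "(\<lambda>i\<in>L1. W2 \<omega> (i + int s) /\<^sub>R norm (W2 \<omega> (int s))) = N1 \<omega>"
      using aT by (auto simp: fun_eq_iff W2_def N1_def L1_def S_def r_def a_def)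
    moreover have "W2 \<omega> (int s) = M (int s) \<omega>" using aT by (simp add: W2_def S_def)
    ultimately show "G (W2 \<omega>) = F (N1 \<omega>) * ennreal (r \<omega> powr \<alpha>) * indicator {\<omega>. M (int s) \<omega> \<noteq> 0} \<omega>"
      by (simp add: G_def r_def indicator_def)
  qed
  finally show "(\<integral>\<^sup>+\<omega>. F (\<lambda>i\<in>{- int s..int (Suc t)}. M i \<omega>) \<partial>\<Omega>) =
    (\<integral>\<^sup>+\<omega>. F (\<lambda>i\<in>{- int s..int (Suc t)}. M (i + int s) \<omega> /\<^sub>R norm (M (int s) \<omega>)) *
          ennreal (norm (M (int s) \<omega>) powr \<alpha>) * indicator {\<omega>. M (int s) \<omega> \<noteq> 0} \<omega> \<partial>\<Omega>)"
    by (simp only: W1_def N1_def L1_def a_def sT r_def)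
qed

end


context btc begin

lemma M0_norm: "AE \<omega> in \<Omega>. norm (M 0 \<omega>) = 1"
proof -
  define P where "P = distr \<Omega> borel (\<lambda>\<omega>. (M 0 \<omega>, M 1 \<omega>))"
  have pm: "(\<lambda>\<omega>. (M 0 \<omega>, M 1 \<omega>)) \<in> \<Omega> \<rightarrow>\<^sub>M (borel :: ('d \<times> 'd) measure)"
    by (intro pair_bm Mm)
  have ps: "prob_space P" using Pin by (simp add: in_M_alpha_def P_def)
  have e1: "emeasure P (sphere 0 1 \<times> UNIV) = 1" using Pin by (simp add: in_M_alpha_def P_def)
  have sb: "sphere (0::'d) 1 \<times> (UNIV::'d set) \<in> sets borel"
  proof -
    have "sphere (0::'d) 1 \<times> (UNIV::'d set) \<in> sets (borel \<Otimes>\<^sub>M borel)" by (intro pair_measureI) auto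
    then show ?thesis by (metis borel_prod)
  qed
  have "AE p in P. p \<in> sphere 0 1 \<times> UNIV"
  proof -
    have sp: "space P = UNIV" by (simp add: P_def)
    have "{p \<in> space P. p \<in> sphere (0::'d) 1 \<times> (UNIV::'d set)} = sphere 0 1 \<times> UNIV" by (simp add: sp)
    moreover have "Measurable.pred P (\<lambda>p. p \<in> sphere (0::'d) 1 \<times> (UNIV::'d set))"
      using sb by (simp add: P_def)
    ultimately show ?thesis using prob_space.AE_iff_emeasure_eq_1[OF ps] e1 by simp
  qed
  then have "AE \<omega> in \<Omega>. (M 0 \<omega>, M 1 \<omega>) \<in> sphere 0 1 \<times> UNIV"
    unfolding P_def by (rule AE_distrD[OF pm])
  then show ?thesis by (auto elim!: AE_mp)
qed

lemma absorb1:
  fixes T :: int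
  assumes "0 \<le> T"
  shows "AE \<omega> in \<Omega>. M T \<omega> = 0 \<longrightarrow> M (T+1) \<omega> = 0"
proof -
  define F where "F = (\<lambda>w::int \<Rightarrow> 'd. indicator {0::'d} (w T) * indicator (- {0::'d}) (w (T+1)) :: ennreal)"
  have Fm: "F \<in> borel_measurable (PiM {T..T+1} (\<lambda>_. borel))"
  proof -
    have c1: "(\<lambda>w. w T) \<in> PiM {T..T+1} (\<lambda>_. borel) \<rightarrow>\<^sub>M (borel::'d measure)"
      by (rule measurable_component_singleton) simp
    have c2: "(\<lambda>w. w (T+1)) \<in> PiM {T..T+1} (\<lambda>_. borel) \<rightarrow>\<^sub>M (borel::'d measure)"
      by (rule measurable_component_singleton) simp
    have c3: "(\<lambda>w. indicator {0::'d} (w T) :: ennreal) \<in> borel_measurable (PiM {T..T+1} (\<lambda>_. borel))"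
      using measurable_compose[OF c1 borel_measurable_indicator[of "{0::'d}" borel]] by simp
    have c4: "(\<lambda>w. indicator (-{0::'d}) (w (T+1)) :: ennreal) \<in> borel_measurable (PiM {T..T+1} (\<lambda>_. borel))"
      using measurable_compose[OF c2 borel_measurable_indicator[of "-{0::'d}" borel]] by simp
    note c3[measurable] c4[measurable]
    show ?thesis unfolding F_def by measurable
  qed
  have "(\<integral>\<^sup>+\<omega>. F (\<lambda>i\<in>{T..T+1}. M i \<omega>) \<partial>\<Omega>)
      = (\<integral>\<^sup>+\<omega>. \<integral>\<^sup>+y. F ((\<lambda>i\<in>{T..T+1}. M i \<omega>)(T+1 := y)) \<partial>tail_kernel \<kappa>f (M T \<omega>) \<partial>\<Omega>)"
    using fwd_step[of T T F] assms Fm by simp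
  also have "\<dots> = (\<integral>\<^sup>+\<omega>. 0 \<partial>\<Omega>)"
  proof (intro nn_integral_cong)
    fix \<omega>
    show "(\<integral>\<^sup>+y. F ((\<lambda>i\<in>{T..T+1}. M i \<omega>)(T+1 := y)) \<partial>tail_kernel \<kappa>f (M T \<omega>)) = 0"
    proof (cases "M T \<omega> = 0")
      case True
      have "(\<lambda>y. F ((\<lambda>i\<in>{T..T+1}. M i \<omega>)(T+1 := y))) \<in> borel_measurable borel"
        unfolding F_def by simp
      then show ?thesis using True by (simp add: tk_zero nn_integral_return F_def)
    next
      case False
      then show ?thesis by (simp add: F_def)
    qed
  qed
  finally have "(\<integral>\<^sup>+\<omega>. F (\<lambda>i\<in>{T..T+1}. M i \<omega>) \<partial>\<Omega>) = 0" by simp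
  moreover have "(\<lambda>\<omega>. F (\<lambda>i\<in>{T..T+1}. M i \<omega>)) \<in> borel_measurable \<Omega>"
    using measurable_compose[OF measurable_restrict[of "{T..T+1}" "\<lambda>i. M i" \<Omega> "\<lambda>_. borel"] Fm] Mm by simp
  ultimately have "AE \<omega> in \<Omega>. F (\<lambda>i\<in>{T..T+1}. M i \<omega>) = 0"
    by (simp add: nn_integral_0_iff_AE)
  then show ?thesis by (rule AE_mp) (auto simp: F_def indicator_def intro!: AE_I2)
qed

lemma absorb:
  "AE \<omega> in \<Omega>. M 1 \<omega> = 0 \<longrightarrow> M (1 + int n) \<omega> = 0"
proof (induction n)
  case 0 then show ?case by simp
next
  case (Suc n)
  have "AE \<omega> in \<Omega>. M (1 + int n) \<omega> = 0 \<longrightarrow> M (1 + int n + 1) \<omega> = 0" by (rule absorb1) simp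
  with Suc show ?case by (auto elim!: AE_mp simp: add.commute add.left_commute)
qed

lemma TC_1_0: "TC \<alpha> \<Omega> M 1 0"
  unfolding TC_def
proof (intro allI impI)
  fix F :: "(int \<Rightarrow> 'd) \<Rightarrow> ennreal"
  assume Fm0: "F \<in> borel_measurable (PiM {- int 1..int 0} (\<lambda>_. borel))"
  assume Fv0: "\<forall>y\<in>space (PiM {- int 1..int 0} (\<lambda>_. (borel::'d measure))). y (- int 1) = 0 \<longrightarrow> F y = 0"
  define L where "L = {-1..0::int}"
  have Fm: "F \<in> borel_measurable (PiM L (\<lambda>_. borel))" using Fm0 by (simp add: L_def)
  have Fv: "\<And>y. y \<in> space (PiM L (\<lambda>_. (borel::'d measure))) \<Longrightarrow> y (-1) = 0 \<Longrightarrow> F y = 0"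
    using Fv0 by (simp add: L_def)
  have m1: "\<And>x::int. x \<noteq> 0 \<Longrightarrow> -1 \<le> x \<Longrightarrow> x \<le> 0 \<Longrightarrow> x = -1" by arith
  define V where "V = (\<lambda>p::'d \<times> 'd. \<lambda>i\<in>L. if i = 0 then fst p else snd p)"
  have Vm: "V \<in> borel \<rightarrow>\<^sub>M PiM L (\<lambda>_. borel)"
    unfolding V_def
  proof (intro measurable_restrict)
    fix i show "(\<lambda>p::'d \<times> 'd. if i = 0 then fst p else snd p) \<in> borel \<rightarrow>\<^sub>M borel"
      by (cases "i = 0") (simp_all add: fst_bm snd_bm)
  qed
  define \<phi> where "\<phi> = (\<lambda>p. F (V p))"
  have \<phi>m: "\<phi> \<in> borel_measurable borel" unfolding \<phi>_def using measurable_compose[OF Vm Fm] .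
  define P where "P = distr \<Omega> borel (\<lambda>\<omega>. (M 0 \<omega>, M 1 \<omega>))"
  define Q where "Q = distr \<Omega> borel (\<lambda>\<omega>. (M 0 \<omega>, M (-1) \<omega>))"
  have pm: "(\<lambda>\<omega>. (M 0 \<omega>, M 1 \<omega>)) \<in> \<Omega> \<rightarrow>\<^sub>M (borel :: ('d \<times> 'd) measure)" by (intro pair_bm Mm)
  have qm: "(\<lambda>\<omega>. (M 0 \<omega>, M (-1) \<omega>)) \<in> \<Omega> \<rightarrow>\<^sub>M (borel :: ('d \<times> 'd) measure)" by (intro pair_bm Mm)
  have sb: "sphere (0::'d) 1 \<times> (UNIV::'d set) \<in> sets borel"
  proof -
    have "sphere (0::'d) 1 \<times> (UNIV::'d set) \<in> sets (borel \<Otimes>\<^sub>M borel)" by (intro pair_measureI) auto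
    then show ?thesis by (metis borel_prod)
  qed
  have AEQ: "AE p in Q. p \<in> sphere 0 1 \<times> UNIV"
  proof -
    have ps: "prob_space Q" using Qin by (simp add: in_M_alpha_def Q_def)
    have e1: "emeasure Q (sphere 0 1 \<times> UNIV) = 1" using Qin by (simp add: in_M_alpha_def Q_def)
    have sp: "space Q = UNIV" by (simp add: Q_def)
    have "{p \<in> space Q. p \<in> sphere (0::'d) 1 \<times> (UNIV::'d set)} = sphere 0 1 \<times> UNIV" by (simp add: sp)
    moreover have "Measurable.pred Q (\<lambda>p. p \<in> sphere (0::'d) 1 \<times> (UNIV::'d set))"
      using sb by (simp add: Q_def)
    ultimately show ?thesis using prob_space.AE_iff_emeasure_eq_1[OF ps] e1 by simp
  qed
  have "(\<integral>\<^sup>+\<omega>. F (\<lambda>i\<in>L. M i \<omega>) \<partial>\<Omega>) = (\<integral>\<^sup>+\<omega>. \<phi> (M 0 \<omega>, M (-1) \<omega>) \<partial>\<Omega>)"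
  proof (intro nn_integral_cong)
    fix \<omega>
    have "(\<lambda>i\<in>L. M i \<omega>) = V (M 0 \<omega>, M (-1) \<omega>)"
      by (auto simp: fun_eq_iff V_def L_def dest: m1)
    then show "F (\<lambda>i\<in>L. M i \<omega>) = \<phi> (M 0 \<omega>, M (-1) \<omega>)" by (simp add: \<phi>_def)
  qed
  also have "\<dots> = (\<integral>\<^sup>+p. \<phi> p \<partial>Q)"
    unfolding Q_def using \<phi>m by (simp add: nn_integral_distr[OF qm])
  also have "\<dots> = (\<integral>\<^sup>+p. \<phi> p * indicator Dset p \<partial>Q)"
  proof (rule nn_integral_cong_AE)
    show "AE p in Q. \<phi> p = \<phi> p * indicator Dset p"
      using AEQ
    proof (rule AE_mp, intro AE_I2 impI)
      fix p :: "'d \<times> 'd" assume p: "p \<in> sphere 0 1 \<times> UNIV"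
      show "\<phi> p = \<phi> p * indicator Dset p"
      proof (cases "snd p = 0")
        case True
        have "V p \<in> space (PiM L (\<lambda>_. borel))" by (simp add: V_def space_PiM)
        moreover have "V p (-1) = 0" using True by (simp add: V_def L_def)
        ultimately have "\<phi> p = 0" unfolding \<phi>_def by (rule Fv)
        then show ?thesis by simp
      next
        case False
        then have "p \<in> Dset" using p by (auto simp: Dset_def)
        then show ?thesis by simp
      qed
    qed
  qed
  also have "\<dots> = (\<integral>\<^sup>+p. indicator Dset p * \<phi> (Tmap p) * ennreal (norm (snd p) powr \<alpha>) \<partial>P)"
    by (rule adjoint_fun) (use adjPQ in \<open>simp_all add: P_def Q_def \<phi>m\<close>)
  also have "\<dots> = (\<integral>\<^sup>+\<omega>. indicator Dset (M 0 \<omega>, M 1 \<omega>) * \<phi> (Tmap (M 0 \<omega>, M 1 \<omega>))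
       * ennreal (norm (M 1 \<omega>) powr \<alpha>) \<partial>\<Omega>)"
    unfolding P_def using \<phi>m by (simp add: nn_integral_distr[OF pm])
  also have "\<dots> = (\<integral>\<^sup>+\<omega>. F (\<lambda>i\<in>L. M (i + 1) \<omega> /\<^sub>R norm (M 1 \<omega>))
          * ennreal (norm (M 1 \<omega>) powr \<alpha>) * indicator {\<omega>. M 1 \<omega> \<noteq> 0} \<omega> \<partial>\<Omega>)"
  proof (rule nn_integral_cong_AE)
    show "AE \<omega> in \<Omega>. indicator Dset (M 0 \<omega>, M 1 \<omega>) * \<phi> (Tmap (M 0 \<omega>, M 1 \<omega>)) * ennreal (norm (M 1 \<omega>) powr \<alpha>)
      = F (\<lambda>i\<in>L. M (i + 1) \<omega> /\<^sub>R norm (M 1 \<omega>)) * ennreal (norm (M 1 \<omega>) powr \<alpha>) * indicator {\<omega>. M 1 \<omega> \<noteq> 0} \<omega>"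
      using M0_norm
    proof (rule AE_mp, intro AE_I2 impI)
      fix \<omega> assume n1: "norm (M 0 \<omega>) = 1"
      have V: "V (Tmap (M 0 \<omega>, M 1 \<omega>)) = (\<lambda>i\<in>L. M (i + 1) \<omega> /\<^sub>R norm (M 1 \<omega>))"
        by (auto simp: fun_eq_iff V_def L_def Tmap_def dest: m1)
      have D: "indicator Dset (M 0 \<omega>, M 1 \<omega>) = (indicator {\<omega>. M 1 \<omega> \<noteq> 0} \<omega> :: ennreal)"
        using n1 by (simp add: Dset_def indicator_def)
      show "indicator Dset (M 0 \<omega>, M 1 \<omega>) * \<phi> (Tmap (M 0 \<omega>, M 1 \<omega>)) * ennreal (norm (M 1 \<omega>) powr \<alpha>)
      = F (\<lambda>i\<in>L. M (i + 1) \<omega> /\<^sub>R norm (M 1 \<omega>)) * ennreal (norm (M 1 \<omega>) powr \<alpha>) * indicator {\<omega>. M 1 \<omega> \<noteq> 0} \<omega>"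
        unfolding D \<phi>_def V by (simp add: mult_ac)
    qed
  qed
  finally show "(\<integral>\<^sup>+\<omega>. F (\<lambda>i\<in>{- int 1..int 0}. M i \<omega>) \<partial>\<Omega>) =
    (\<integral>\<^sup>+\<omega>. F (\<lambda>i\<in>{- int 1..int 0}. M (i + int 1) \<omega> /\<^sub>R norm (M (int 1) \<omega>)) *
          ennreal (norm (M (int 1) \<omega>) powr \<alpha>) * indicator {\<omega>. M (int 1) \<omega> \<noteq> 0} \<omega> \<partial>\<Omega>)"
    by (simp add: L_def)
qed

lemma TC_back:
  assumes s1: "1 \<le> s" and IH0: "TC \<alpha> \<Omega> M s 0" and IH1: "TC \<alpha> \<Omega> M 1 s"
  shows "TC \<alpha> \<Omega> M (Suc s) 0"
  unfolding TC_def
proof (intro allI impI)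
  fix F :: "(int \<Rightarrow> 'd) \<Rightarrow> ennreal"
  define \<sigma> where "\<sigma> = int s"
  define a where "a = - int (Suc s)"
  define L0 where "L0 = {-\<sigma>..0}"
  define L1 where "L1 = {a..0}"
  define K where "K = tail_kernel \<kappa>b"
  have \<sigma>1: "1 \<le> \<sigma>" using s1 by (simp add: \<sigma>_def)
  have sS: "int (Suc s) = \<sigma> + 1" by (simp_all add: \<sigma>_def)
  have a\<sigma>: "a = - \<sigma> - 1" by (simp add: a_def \<sigma>_def)
  have L01: "insert a L0 = L1" using \<sigma>1 by (auto simp: L0_def L1_def a\<sigma>)
  assume Fm0: "F \<in> borel_measurable (PiM {- int (Suc s)..int 0} (\<lambda>_. borel))"
  assume Fv0: "\<forall>y\<in>space (PiM {- int (Suc s)..int 0} (\<lambda>_. (borel::'d measure))). y (- int (Suc s)) = 0 \<longrightarrow> F y = 0"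
  have Fm: "F \<in> borel_measurable (PiM L1 (\<lambda>_. borel))" using Fm0 by (simp only: a_def L1_def of_nat_0)
  have Fv: "\<And>y. y \<in> space (PiM L1 (\<lambda>_. (borel::'d measure))) \<Longrightarrow> y a = 0 \<Longrightarrow> F y = 0"
    using Fv0 by (simp only: a_def L1_def of_nat_0)
  define F' where "F' = (\<lambda>w. \<integral>\<^sup>+y. F (w(a := y)) \<partial>K (w (-\<sigma>)))"
  have F'm: "F' \<in> borel_measurable (PiM L0 (\<lambda>_. borel))"
    unfolding F'_def K_def using Fm L01 \<sigma>1 by (intro kint_meas Kb) (auto simp: L0_def)
  have F'm': "F' \<in> borel_measurable (PiM {- int s..int 0} (\<lambda>_. borel))" using F'm by (simp add: L0_def \<sigma>_def)
  have F'v: "\<forall>y\<in>space (PiM {- int s..int 0} (\<lambda>_. (borel::'d measure))). y (- int s) = 0 \<longrightarrow> F' y = 0"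
  proof (intro ballI impI)
    fix y assume y: "y \<in> space (PiM {- int s..int 0} (\<lambda>_. (borel::'d measure)))" and y0: "y (- int s) = 0"
    have yL: "y \<in> space (PiM L0 (\<lambda>_. borel))" using y by (simp add: L0_def \<sigma>_def)
    have hm: "(\<lambda>z. F (y(a := z))) \<in> borel_measurable borel"
      using measurable_compose[OF upd_meas1[OF yL, of a] Fm[folded L01]] .
    have "F (y(a := 0)) = 0"
    proof (rule Fv)
      show "y(a := 0) \<in> space (PiM L1 (\<lambda>_. borel))"
        using yL L01 by (auto simp: space_PiM PiE_def extensional_def)
    qed simp
    then show "F' y = 0" using y0 hm by (simp add: F'_def K_def \<sigma>_def tk_zero nn_integral_return)
  qed
  define W0 where "W0 = (\<lambda>\<omega>. \<lambda>i\<in>L0. M i \<omega>)"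
  define W1 where "W1 = (\<lambda>\<omega>. \<lambda>i\<in>L1. M i \<omega>)"
  define W2 where "W2 = (\<lambda>\<omega>. \<lambda>i\<in>{-1..\<sigma>}. M i \<omega>)"
  define r where "r = (\<lambda>\<omega>. norm (M \<sigma> \<omega>))"
  define N0 where "N0 = (\<lambda>\<omega>. \<lambda>i\<in>L0. M (i + \<sigma>) \<omega> /\<^sub>R r \<omega>)"
  define \<rho> where "\<rho> = (\<lambda>\<omega>. norm (M 1 \<omega>))"
  define N2 where "N2 = (\<lambda>\<omega>. \<lambda>i\<in>{-1..\<sigma>}. M (i + 1) \<omega> /\<^sub>R \<rho> \<omega>)"
  define R where "R = (\<lambda>\<omega>. norm (M (\<sigma> + 1) \<omega>))"
  define N1 where "N1 = (\<lambda>\<omega>. \<lambda>i\<in>L1. M (i + (\<sigma> + 1)) \<omega> /\<^sub>R R \<omega>)"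
  define H where "H = (\<lambda>w. F (\<lambda>i\<in>L1. w (i + \<sigma>) /\<^sub>R norm (w \<sigma>))
      * ennreal (norm (w \<sigma>) powr \<alpha>) * indicator {w. w \<sigma> \<noteq> 0} w)"
  have Hm: "H \<in> borel_measurable (PiM {-1..\<sigma>} (\<lambda>_. borel))"
  proof -
    have sm: "(\<lambda>w. \<lambda>i\<in>L1. w (i + \<sigma>) /\<^sub>R norm (w \<sigma>)) \<in> PiM {-1..\<sigma>} (\<lambda>_. borel) \<rightarrow>\<^sub>M PiM L1 (\<lambda>_. (borel::'d measure))"
      by (rule shift_meas) (use \<sigma>1 in \<open>auto simp: L1_def a\<sigma>\<close>)
    have cm: "(\<lambda>w. w \<sigma>) \<in> PiM {-1..\<sigma>} (\<lambda>_. borel) \<rightarrow>\<^sub>M (borel::'d measure)"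
      by (rule measurable_component_singleton) (use \<sigma>1 in auto)
    have im: "(\<lambda>w. indicator {w. w \<sigma> \<noteq> (0::'d)} w :: ennreal) \<in> borel_measurable (PiM {-1..\<sigma>} (\<lambda>_. borel))"
    proof -
      have "(\<lambda>w::int\<Rightarrow>'d. indicator {w. w \<sigma> \<noteq> (0::'d)} w :: ennreal) = (\<lambda>w. indicator (- {0}) (w \<sigma>))"
        by (auto simp: indicator_def fun_eq_iff)
      moreover have "(\<lambda>w. indicator (- {0::'d}) (w \<sigma>) :: ennreal) \<in> borel_measurable (PiM {-1..\<sigma>} (\<lambda>_. borel))"
        using measurable_compose[OF cm borel_measurable_indicator[of "- {0::'d}" borel]] by simp
      ultimately show ?thesis by simp
    qed
    show ?thesis unfolding H_def
      using measurable_compose[OF sm Fm] cm im by measurable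
  qed
  have Hm': "H \<in> borel_measurable (PiM {- int 1..int s} (\<lambda>_. borel))" using Hm by (simp add: \<sigma>_def)
  have Hv: "\<forall>y\<in>space (PiM {- int 1..int s} (\<lambda>_. (borel::'d measure))). y (- int 1) = 0 \<longrightarrow> H y = 0"
  proof (intro ballI impI)
    fix y assume "y \<in> space (PiM {- int 1..int s} (\<lambda>_. (borel::'d measure)))" and y0: "y (- int 1) = 0"
    have "F (\<lambda>i\<in>L1. y (i + \<sigma>) /\<^sub>R norm (y \<sigma>)) = 0"
    proof (rule Fv)
      show "(\<lambda>i\<in>L1. y (i + \<sigma>) /\<^sub>R norm (y \<sigma>)) \<in> space (PiM L1 (\<lambda>_. borel))" by (simp add: space_PiM)
      show "(\<lambda>i\<in>L1. y (i + \<sigma>) /\<^sub>R norm (y \<sigma>)) a = 0"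
        using y0 \<sigma>1 by (simp add: L1_def a\<sigma>)
    qed
    then show "H y = 0" by (simp add: H_def)
  qed
  have "(\<integral>\<^sup>+\<omega>. F (W1 \<omega>) \<partial>\<Omega>) = (\<integral>\<^sup>+\<omega>. \<integral>\<^sup>+y. F ((W1 \<omega>)(a := y)) \<partial>K (M (a+1) \<omega>) \<partial>\<Omega>)"
  proof -
    have "a \<le> -1" "a < 0" using \<sigma>1 by (auto simp: a\<sigma>)
    then show ?thesis unfolding W1_def L1_def K_def using bwd_step Fm[unfolded L1_def] by simp
  qed
  also have "\<dots> = (\<integral>\<^sup>+\<omega>. F' (W0 \<omega>) \<partial>\<Omega>)"
  proof (intro nn_integral_cong)
    fix \<omega>
    have "(W1 \<omega>)(a := y) = (W0 \<omega>)(a := y)" for y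
      by (auto simp: W0_def W1_def L0_def L1_def fun_eq_iff a\<sigma>)
    moreover have "W0 \<omega> (-\<sigma>) = M (a+1) \<omega>" using \<sigma>1 by (simp add: W0_def L0_def a\<sigma>)
    ultimately show "(\<integral>\<^sup>+y. F ((W1 \<omega>)(a := y)) \<partial>K (M (a+1) \<omega>)) = F' (W0 \<omega>)"
      by (simp add: F'_def)
  qed
  also have "\<dots> = (\<integral>\<^sup>+\<omega>. F' (N0 \<omega>) * ennreal (r \<omega> powr \<alpha>) * indicator {\<omega>. M \<sigma> \<omega> \<noteq> 0} \<omega> \<partial>\<Omega>)"
    using IH0[unfolded TC_def, THEN spec[of _ F'], THEN mp, OF F'm', THEN mp] F'v
    by (simp add: W0_def N0_def r_def L0_def \<sigma>_def)
  also have "\<dots> = (\<integral>\<^sup>+\<omega>. \<integral>\<^sup>+z. H ((W2 \<omega>)(-1 := z)) \<partial>K (M 0 \<omega>) \<partial>\<Omega>)"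
  proof (intro nn_integral_cong)
    fix \<omega>
    have W2s: "((W2 \<omega>)(-1 := z)) \<sigma> = M \<sigma> \<omega>" for z
      using \<sigma>1 by (simp add: W2_def)
    show "F' (N0 \<omega>) * ennreal (r \<omega> powr \<alpha>) * indicator {\<omega>. M \<sigma> \<omega> \<noteq> 0} \<omega>
        = (\<integral>\<^sup>+z. H ((W2 \<omega>)(-1 := z)) \<partial>K (M 0 \<omega>))"
    proof (cases "M \<sigma> \<omega> = 0")
      case True
      have "H ((W2 \<omega>)(-1 := z)) = 0" for z
      proof -
        have "indicator {w. w \<sigma> \<noteq> 0} ((W2 \<omega>)(-1 := z)) = (0::ennreal)"
          by (simp only: indicator_def mem_Collect_eq W2s True) simp
        then show ?thesis unfolding H_def by simp
      qed
      then show ?thesis using True by simp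
    next
      case False
      then have rpos: "r \<omega> > 0" by (simp add: r_def)
      have N0sp: "N0 \<omega> \<in> space (PiM L0 (\<lambda>_. borel))" by (simp add: N0_def space_PiM)
      have hm: "(\<lambda>y. F ((N0 \<omega>)(a := y))) \<in> borel_measurable borel"
        using measurable_compose[OF upd_meas1[OF N0sp, of a] Fm[folded L01]] .
      have N0T: "N0 \<omega> (-\<sigma>) = M 0 \<omega> /\<^sub>R r \<omega>" using \<sigma>1 by (simp add: N0_def L0_def)
      have "F' (N0 \<omega>) = (\<integral>\<^sup>+z. F ((N0 \<omega>)(a := z /\<^sub>R r \<omega>)) \<partial>K (M 0 \<omega>))"
        unfolding F'_def N0T K_def by (rule tk_hom[OF kbm rpos hm])
      moreover have "H ((W2 \<omega>)(-1 := z)) = F ((N0 \<omega>)(a := z /\<^sub>R r \<omega>)) * ennreal (r \<omega> powr \<alpha>)" for z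
      proof -
        define w' where "w' = (W2 \<omega>)(-1 := z)"
        have ws: "w' \<sigma> = M \<sigma> \<omega>" unfolding w'_def by (rule W2s)
        have wf: "(\<lambda>i\<in>L1. w' (i + \<sigma>) /\<^sub>R norm (M \<sigma> \<omega>)) = (N0 \<omega>)(a := z /\<^sub>R r \<omega>)"
          unfolding w'_def using \<sigma>1 by (auto simp: fun_eq_iff W2_def N0_def L0_def L1_def r_def a\<sigma>)
        have "H w' = F ((N0 \<omega>)(a := z /\<^sub>R r \<omega>)) * ennreal (r \<omega> powr \<alpha>)"
          by (simp only: H_def ws wf indicator_def mem_Collect_eq) (simp add: False r_def)
        then show ?thesis by (simp only: w'_def)
      qed
      moreover have "(\<lambda>z. F ((N0 \<omega>)(a := z /\<^sub>R r \<omega>))) \<in> borel_measurable (K (M 0 \<omega>))"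
        unfolding K_def Kmeas_cong using hm by measurable
      ultimately show ?thesis using False
        by (simp add: nn_integral_multc r_def)
    qed
  qed
  also have "\<dots> = (\<integral>\<^sup>+\<omega>. H (W2 \<omega>) \<partial>\<Omega>)"
    unfolding W2_def K_def using bwd_step[of "-1" \<sigma> H] Hm \<sigma>1 by simp
  also have "\<dots> = (\<integral>\<^sup>+\<omega>. H (N2 \<omega>) * ennreal (\<rho> \<omega> powr \<alpha>) * indicator {\<omega>. M 1 \<omega> \<noteq> 0} \<omega> \<partial>\<Omega>)"
    using IH1[unfolded TC_def, THEN spec[of _ H], THEN mp, OF Hm', THEN mp] Hv
    by (simp add: W2_def N2_def \<rho>_def \<sigma>_def)
  also have "\<dots> = (\<integral>\<^sup>+\<omega>. F (N1 \<omega>) * ennreal (R \<omega> powr \<alpha>) * indicator {\<omega>. M (\<sigma>+1) \<omega> \<noteq> 0} \<omega> \<partial>\<Omega>)"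
  proof (rule nn_integral_cong_AE)
    show "AE \<omega> in \<Omega>. H (N2 \<omega>) * ennreal (\<rho> \<omega> powr \<alpha>) * indicator {\<omega>. M 1 \<omega> \<noteq> 0} \<omega>
        = F (N1 \<omega>) * ennreal (R \<omega> powr \<alpha>) * indicator {\<omega>. M (\<sigma>+1) \<omega> \<noteq> 0} \<omega>"
      using absorb[of s]
    proof (rule AE_mp, intro AE_I2 impI)
      fix \<omega> assume ab: "M 1 \<omega> = 0 \<longrightarrow> M (1 + int s) \<omega> = 0"
      show "H (N2 \<omega>) * ennreal (\<rho> \<omega> powr \<alpha>) * indicator {\<omega>. M 1 \<omega> \<noteq> 0} \<omega>
        = F (N1 \<omega>) * ennreal (R \<omega> powr \<alpha>) * indicator {\<omega>. M (\<sigma>+1) \<omega> \<noteq> 0} \<omega>"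
      proof (cases "M 1 \<omega> = 0")
        case True
        then show ?thesis using ab by (simp add: \<sigma>_def add.commute)
      next
        case False
        then have \<rho>pos: "\<rho> \<omega> > 0" by (simp add: \<rho>_def)
        have N2s: "N2 \<omega> \<sigma> = M (\<sigma> + 1) \<omega> /\<^sub>R \<rho> \<omega>" using \<sigma>1 by (simp add: N2_def)
        show ?thesis
        proof (cases "M (\<sigma>+1) \<omega> = 0")
          case True
          have "H (N2 \<omega>) = 0"
            by (simp only: H_def N2s True indicator_def mem_Collect_eq) simp
          then show ?thesis using True by simp
        next
          case False2: False
          then have Rpos: "R \<omega> > 0" by (simp add: R_def)
          have nN2: "norm (N2 \<omega> \<sigma>) = R \<omega> / \<rho> \<omega>" using \<rho>pos by (simp add: N2s R_def \<rho>_def divide_inverse mult.commute)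
          have f1: "(\<lambda>i\<in>L1. N2 \<omega> (i + \<sigma>) /\<^sub>R (R \<omega> / \<rho> \<omega>)) = N1 \<omega>"
            using \<sigma>1 \<rho>pos Rpos by (auto simp: fun_eq_iff N2_def N1_def L1_def a\<sigma> add.assoc divide_inverse)
          have p: "(R \<omega> / \<rho> \<omega>) powr \<alpha> * \<rho> \<omega> powr \<alpha> = R \<omega> powr \<alpha>"
            using \<rho>pos Rpos by (simp add: powr_divide)
          have "H (N2 \<omega>) * ennreal (\<rho> \<omega> powr \<alpha>) = F (N1 \<omega>) * ennreal ((R \<omega> / \<rho> \<omega>) powr \<alpha>) * ennreal (\<rho> \<omega> powr \<alpha>)"
          proof -
            have nz: "N2 \<omega> \<sigma> \<noteq> 0" using False2 \<rho>pos by (simp add: N2s)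
            show ?thesis by (simp only: H_def nN2 f1 indicator_def mem_Collect_eq) (simp add: nz)
          qed
          also have "\<dots> = F (N1 \<omega>) * ennreal (R \<omega> powr \<alpha>)"
            by (simp add: mult.assoc ennreal_mult'[symmetric] p)
          finally show ?thesis using False False2 by simp
        qed
      qed
    qed
  qed
  finally show "(\<integral>\<^sup>+\<omega>. F (\<lambda>i\<in>{- int (Suc s)..int 0}. M i \<omega>) \<partial>\<Omega>) =
    (\<integral>\<^sup>+\<omega>. F (\<lambda>i\<in>{- int (Suc s)..int 0}. M (i + int (Suc s)) \<omega> /\<^sub>R norm (M (int (Suc s)) \<omega>)) *
          ennreal (norm (M (int (Suc s)) \<omega>) powr \<alpha>) * indicator {\<omega>. M (int (Suc s)) \<omega> \<noteq> 0} \<omega> \<partial>\<Omega>)"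
    by (simp only: W1_def N1_def L1_def a_def sS R_def of_nat_0)
qed

lemma TC_all: "1 \<le> s \<Longrightarrow> TC \<alpha> \<Omega> M s t"
proof -
  have t1: "TC \<alpha> \<Omega> M 1 t" for t
  proof (induction t)
    case 0 show ?case by (rule TC_1_0)
  next
    case (Suc t) then show ?case by (rule TC_succ)
  qed
  have s0: "1 \<le> s \<Longrightarrow> TC \<alpha> \<Omega> M s 0" for s
  proof (induction s)
    case 0 then show ?case by simp
  next
    case (Suc s)
    show ?case
    proof (cases "s = 0")
      case True then show ?thesis using TC_1_0 by simp
    next
      case False
      then show ?thesis using Suc TC_back[of s] t1 by simp
    qed
  qed
  assume "1 \<le> s"
  then show ?thesis by (induction t) (simp_all add: s0 TC_succ)
qed

end


lemma btc_from_def: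
  assumes "\<alpha> > 0" "prob_space \<Omega>" "back_and_forth_tail_chain \<alpha> \<Omega> M"
  shows "\<exists>\<kappa>f \<kappa>b. btc \<alpha> \<Omega> M \<kappa>f \<kappa>b"
  using assms unfolding back_and_forth_tail_chain_def btc_def Let_def by blast

lemma nonzero_part:
  fixes \<alpha> :: real
    and \<Omega>\<^sub>Y :: "'a measure" and Y :: "int \<Rightarrow> 'a \<Rightarrow> 'd::euclidean_space"
    and \<Omega>\<^sub>M :: "'b measure" and M :: "int \<Rightarrow> 'b \<Rightarrow> 'd"
  assumes btc: "btc \<alpha> \<Omega>\<^sub>M M \<kappa>f \<kappa>b"
    and pY: "prob_space \<Omega>\<^sub>Y" and Ym: "\<And>t. Y t \<in> borel_measurable \<Omega>\<^sub>Y"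
    and h6: "\<And>t::nat. distr \<Omega>\<^sub>Y (PiM {0..int t} (\<lambda>_. borel)) (\<lambda>\<omega>. \<lambda>i\<in>{0..int t}. Y i \<omega>)
                 = distr \<Omega>\<^sub>M (PiM {0..int t} (\<lambda>_. borel)) (\<lambda>\<omega>. \<lambda>i\<in>{0..int t}. M i \<omega>)"
    and h7: "\<And>(s::nat) (t::nat) (f :: (int \<Rightarrow> 'd) \<Rightarrow> real).
           f \<in> borel_measurable (PiM {- int s..int t} (\<lambda>_. borel)) \<Longrightarrow>
           bounded (f ` space (PiM {- int s..int t} (\<lambda>_. (borel :: 'd measure)))) \<Longrightarrow>
           (\<forall>y \<in> space (PiM {- int s..int t} (\<lambda>_. (borel :: 'd measure))). y (- int s) = 0 \<longrightarrow> f y = 0) \<Longrightarrow>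
           (\<integral>\<omega>. f (\<lambda>i\<in>{- int s..int t}. Y i \<omega>) \<partial>\<Omega>\<^sub>Y)
           = (\<integral>\<omega>. f (\<lambda>i\<in>{- int s..int t}. Y (i + int s) \<omega> /\<^sub>R norm (Y (int s) \<omega>))
                   * norm (Y (int s) \<omega>) powr \<alpha> * indicator {\<omega>. Y (int s) \<omega> \<noteq> 0} \<omega> \<partial>\<Omega>\<^sub>Y)"
    and S1: "1 \<le> S"
    and B: "B \<in> sets (PiM {- int S..int t} (\<lambda>_. (borel::'d measure)))"
    and Bnz: "\<And>w. w \<in> B \<Longrightarrow> w (- int S) \<noteq> 0"
  shows "emeasure (distr \<Omega>\<^sub>Y (PiM {- int S..int t} (\<lambda>_. borel)) (\<lambda>\<omega>. \<lambda>i\<in>{- int S..int t}. Y i \<omega>)) B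
       = emeasure (distr \<Omega>\<^sub>M (PiM {- int S..int t} (\<lambda>_. borel)) (\<lambda>\<omega>. \<lambda>i\<in>{- int S..int t}. M i \<omega>)) B"
proof -
  interpret btc \<alpha> \<Omega>\<^sub>M M \<kappa>f \<kappa>b by (rule btc)
  interpret Y: prob_space \<Omega>\<^sub>Y by (rule pY)
  interpret MM: prob_space \<Omega>\<^sub>M by (rule prob)
  define L where "L = {- int S..int t}"
  define n where "n = S + t"
  define L2 where "L2 = {0..int n}"
  define WY where "WY = (\<lambda>\<omega>. \<lambda>i\<in>L. Y i \<omega>)"
  define WM where "WM = (\<lambda>\<omega>. \<lambda>i\<in>L. M i \<omega>)"
  have WYm: "WY \<in> \<Omega>\<^sub>Y \<rightarrow>\<^sub>M PiM L (\<lambda>_. borel)" unfolding WY_def by (intro measurable_restrict Ym)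
  have WMm: "WM \<in> \<Omega>\<^sub>M \<rightarrow>\<^sub>M PiM L (\<lambda>_. borel)" unfolding WM_def by (intro measurable_restrict Mm)
  have BL: "B \<in> sets (PiM L (\<lambda>_. borel))" using B by (simp add: L_def)
  define G where "G = (\<lambda>w. indicator B (\<lambda>i\<in>L. w (i + int S) /\<^sub>R norm (w (int S)))
      * norm (w (int S)) powr \<alpha> * indicator {w. w (int S) \<noteq> 0} w :: real)"
  have Gm: "G \<in> borel_measurable (PiM L2 (\<lambda>_. borel))"
  proof -
    have sm: "(\<lambda>w. \<lambda>i\<in>L. w (i + int S) /\<^sub>R norm (w (int S))) \<in> PiM L2 (\<lambda>_. borel) \<rightarrow>\<^sub>M PiM L (\<lambda>_. (borel::'d measure))"
      by (rule shift_meas) (auto simp: L_def L2_def n_def)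
    have cm: "(\<lambda>w. w (int S)) \<in> PiM L2 (\<lambda>_. borel) \<rightarrow>\<^sub>M (borel::'d measure)"
      by (rule measurable_component_singleton) (auto simp: L2_def n_def)
    have im: "(\<lambda>w. indicator {w. w (int S) \<noteq> (0::'d)} w :: real) \<in> borel_measurable (PiM L2 (\<lambda>_. borel))"
    proof -
      have "(\<lambda>w::int\<Rightarrow>'d. indicator {w. w (int S) \<noteq> (0::'d)} w :: real) = (\<lambda>w. indicator (- {0}) (w (int S)))"
        by (auto simp: indicator_def fun_eq_iff)
      moreover have "(\<lambda>w. indicator (- {0::'d}) (w (int S)) :: real) \<in> borel_measurable (PiM L2 (\<lambda>_. borel))"
        using measurable_compose[OF cm borel_measurable_indicator[of "- {0::'d}" borel]] by simp
      ultimately show ?thesis by simp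
    qed
    have bm: "(\<lambda>w. indicator B (\<lambda>i\<in>L. w (i + int S) /\<^sub>R norm (w (int S))) :: real) \<in> borel_measurable (PiM L2 (\<lambda>_. borel))"
      using measurable_compose[OF sm borel_measurable_indicator[OF BL]] by simp
    show ?thesis unfolding G_def using bm cm im by measurable
  qed
  define gY where "gY = (\<lambda>\<omega>. indicator B (\<lambda>i\<in>L. Y (i + int S) \<omega> /\<^sub>R norm (Y (int S) \<omega>))
                   * norm (Y (int S) \<omega>) powr \<alpha> * indicator {\<omega>. Y (int S) \<omega> \<noteq> 0} \<omega> :: real)"
  define VY where "VY = (\<lambda>\<omega>. \<lambda>i\<in>L2. Y i \<omega>)"
  define VM where "VM = (\<lambda>\<omega>. \<lambda>i\<in>L2. M i \<omega>)"
  have VYm: "VY \<in> \<Omega>\<^sub>Y \<rightarrow>\<^sub>M PiM L2 (\<lambda>_. borel)" unfolding VY_def by (intro measurable_restrict Ym)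
  have VMm: "VM \<in> \<Omega>\<^sub>M \<rightarrow>\<^sub>M PiM L2 (\<lambda>_. borel)" unfolding VM_def by (intro measurable_restrict Mm)
  have GV: "G (VY \<omega>) = gY \<omega>" for \<omega>
  proof -
    have "(\<lambda>i\<in>L. VY \<omega> (i + int S) /\<^sub>R norm (VY \<omega> (int S))) = (\<lambda>i\<in>L. Y (i + int S) \<omega> /\<^sub>R norm (Y (int S) \<omega>))"
      by (auto simp: fun_eq_iff VY_def L_def L2_def n_def)
    moreover have "VY \<omega> (int S) = Y (int S) \<omega>" by (simp add: VY_def L2_def n_def)
    ultimately show ?thesis by (simp add: G_def gY_def indicator_def)
  qed
  have G0: "G w \<ge> 0" for w by (simp add: G_def)
  have eqD: "distr \<Omega>\<^sub>Y (PiM L2 (\<lambda>_. borel)) VY = distr \<Omega>\<^sub>M (PiM L2 (\<lambda>_. borel)) VM"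
    using h6[of n] by (simp add: VY_def VM_def L2_def)
  have "(\<integral>\<^sup>+\<omega>. ennreal (gY \<omega>) \<partial>\<Omega>\<^sub>Y) = (\<integral>\<^sup>+w. ennreal (G w) \<partial>distr \<Omega>\<^sub>Y (PiM L2 (\<lambda>_. borel)) VY)"
    using Gm by (simp add: nn_integral_distr[OF VYm] GV)
  also have "\<dots> = (\<integral>\<^sup>+w. ennreal (G w) \<partial>distr \<Omega>\<^sub>M (PiM L2 (\<lambda>_. borel)) VM)" by (simp only: eqD)
  also have "\<dots> = (\<integral>\<^sup>+\<omega>. ennreal (G (VM \<omega>)) \<partial>\<Omega>\<^sub>M)"
    using Gm by (simp add: nn_integral_distr[OF VMm])
  also have "\<dots> = (\<integral>\<^sup>+\<omega>. indicator B (\<lambda>i\<in>L. M (i + int S) \<omega> /\<^sub>R norm (M (int S) \<omega>))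
          * ennreal (norm (M (int S) \<omega>) powr \<alpha>) * indicator {\<omega>. M (int S) \<omega> \<noteq> 0} \<omega> \<partial>\<Omega>\<^sub>M)"
  proof (intro nn_integral_cong)
    fix \<omega>
    have "(\<lambda>i\<in>L. VM \<omega> (i + int S) /\<^sub>R norm (VM \<omega> (int S))) = (\<lambda>i\<in>L. M (i + int S) \<omega> /\<^sub>R norm (M (int S) \<omega>))"
      by (auto simp: fun_eq_iff VM_def L_def L2_def n_def)
    moreover have "VM \<omega> (int S) = M (int S) \<omega>" by (simp add: VM_def L2_def n_def)
    ultimately show "ennreal (G (VM \<omega>)) = indicator B (\<lambda>i\<in>L. M (i + int S) \<omega> /\<^sub>R norm (M (int S) \<omega>))
          * ennreal (norm (M (int S) \<omega>) powr \<alpha>) * indicator {\<omega>. M (int S) \<omega> \<noteq> 0} \<omega>"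
      by (simp add: G_def indicator_def)
  qed
  also have "\<dots> = (\<integral>\<^sup>+\<omega>. indicator B (WM \<omega>) \<partial>\<Omega>\<^sub>M)"
  proof -
    have T: "TC \<alpha> \<Omega>\<^sub>M M S t" using TC_all S1 by simp
    have Im: "(indicator B :: (int \<Rightarrow> 'd) \<Rightarrow> ennreal) \<in> borel_measurable (PiM {- int S..int t} (\<lambda>_. borel))"
      using B by simp
    have Iv: "\<forall>y\<in>space (PiM {- int S..int t} (\<lambda>_. (borel::'d measure))). y (- int S) = 0 \<longrightarrow> (indicator B y :: ennreal) = 0"
      using Bnz by (auto simp: indicator_def)
    show ?thesis using T[unfolded TC_def, THEN spec[of _ "indicator B"], THEN mp, OF Im, THEN mp, OF Iv]
      by (simp add: WM_def L_def)
  qed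
  also have "\<dots> = emeasure (distr \<Omega>\<^sub>M (PiM L (\<lambda>_. borel)) WM) B"
  proof -
    have BD: "B \<in> sets (distr \<Omega>\<^sub>M (PiM L (\<lambda>_. borel)) WM)" using BL by simp
    have im: "(indicator B :: _ \<Rightarrow> ennreal) \<in> borel_measurable (distr \<Omega>\<^sub>M (PiM L (\<lambda>_. borel)) WM)" using BL by simp
    show ?thesis
      unfolding nn_integral_indicator[OF BD, symmetric] nn_integral_distr[OF WMm im] by simp
  qed
  finally have eqnn: "(\<integral>\<^sup>+\<omega>. ennreal (gY \<omega>) \<partial>\<Omega>\<^sub>Y) = emeasure (distr \<Omega>\<^sub>M (PiM L (\<lambda>_. borel)) WM) B" .
  have gYm: "gY \<in> borel_measurable \<Omega>\<^sub>Y"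
  proof -
    have "(\<lambda>\<omega>. G (VY \<omega>)) \<in> borel_measurable \<Omega>\<^sub>Y" using measurable_compose[OF VYm Gm] .
    then show ?thesis by (simp add: GV)
  qed
  have fin: "(\<integral>\<^sup>+\<omega>. ennreal (gY \<omega>) \<partial>\<Omega>\<^sub>Y) < \<infinity>"
  proof -
    interpret D: prob_space "distr \<Omega>\<^sub>M (PiM L (\<lambda>_. borel)) WM" by (rule MM.prob_space_distr[OF WMm])
    show ?thesis unfolding eqnn by (simp add: D.emeasure_eq_measure)
  qed
  have intg: "integrable \<Omega>\<^sub>Y gY"
    using gYm fin by (intro integrableI_nonneg) (auto simp: gY_def)
  have fm: "(indicator B :: (int \<Rightarrow> 'd) \<Rightarrow> real) \<in> borel_measurable (PiM {- int S..int t} (\<lambda>_. borel))"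
    using B by simp
  have fb: "bounded ((indicator B :: (int \<Rightarrow> 'd) \<Rightarrow> real) ` space (PiM {- int S..int t} (\<lambda>_. (borel :: 'd measure))))"
    by (rule bounded_subset[of "{0, 1}"]) (auto simp: indicator_def)
  have fv: "\<forall>y \<in> space (PiM {- int S..int t} (\<lambda>_. (borel :: 'd measure))). y (- int S) = 0 \<longrightarrow> (indicator B y :: real) = 0"
    using Bnz by (auto simp: indicator_def)
  have h: "(\<integral>\<omega>. indicator B (WY \<omega>) \<partial>\<Omega>\<^sub>Y) = (\<integral>\<omega>. gY \<omega> \<partial>\<Omega>\<^sub>Y)"
    using h7[OF fm fb fv] by (simp add: WY_def gY_def L_def)
  have intI: "integrable \<Omega>\<^sub>Y (\<lambda>\<omega>. indicator B (WY \<omega>) :: real)"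
  proof (rule Y.integrable_const_bound[where B=1])
    show "AE x in \<Omega>\<^sub>Y. norm (indicator B (WY x) :: real) \<le> 1" by (auto simp: indicator_def)
    show "(\<lambda>\<omega>. indicator B (WY \<omega>) :: real) \<in> borel_measurable \<Omega>\<^sub>Y"
      using measurable_compose[OF WYm borel_measurable_indicator[OF BL]] by simp
  qed
  have "emeasure (distr \<Omega>\<^sub>Y (PiM L (\<lambda>_. borel)) WY) B = (\<integral>\<^sup>+\<omega>. ennreal (indicator B (WY \<omega>)) \<partial>\<Omega>\<^sub>Y)"
  proof -
    have BD: "B \<in> sets (distr \<Omega>\<^sub>Y (PiM L (\<lambda>_. borel)) WY)" using BL by simp
    have im: "(indicator B :: _ \<Rightarrow> ennreal) \<in> borel_measurable (distr \<Omega>\<^sub>Y (PiM L (\<lambda>_. borel)) WY)" using BL by simp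
    show ?thesis
      unfolding nn_integral_indicator[OF BD, symmetric] nn_integral_distr[OF WYm im]
      by (intro nn_integral_cong) (simp add: indicator_def)
  qed
  also have "\<dots> = ennreal (\<integral>\<omega>. indicator B (WY \<omega>) \<partial>\<Omega>\<^sub>Y)"
    using intI by (intro nn_integral_eq_integral) auto
  also have "\<dots> = ennreal (\<integral>\<omega>. gY \<omega> \<partial>\<Omega>\<^sub>Y)" by (simp only: h)
  also have "\<dots> = (\<integral>\<^sup>+\<omega>. ennreal (gY \<omega>) \<partial>\<Omega>\<^sub>Y)"
    using intg by (intro nn_integral_eq_integral[symmetric]) (auto simp: gY_def)
  also have "\<dots> = emeasure (distr \<Omega>\<^sub>M (PiM L (\<lambda>_. borel)) WM) B" by (rule eqnn)
  finally show ?thesis by (simp add: WY_def WM_def L_def)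
qed



lemma restr_emeasure:
  fixes X :: "int \<Rightarrow> 'a \<Rightarrow> 'd::euclidean_space"
  assumes Xm: "\<And>i. X i \<in> borel_measurable \<Omega>" and sub: "L' \<subseteq> L"
    and C: "C \<in> sets (PiM L' (\<lambda>_. (borel::'d measure)))"
  shows "emeasure (distr \<Omega> (PiM L (\<lambda>_. borel)) (\<lambda>\<omega>. \<lambda>i\<in>L. X i \<omega>)) {w\<in>space (PiM L (\<lambda>_. borel)). restrict w L' \<in> C}
       = emeasure (distr \<Omega> (PiM L' (\<lambda>_. borel)) (\<lambda>\<omega>. \<lambda>i\<in>L'. X i \<omega>)) C"
proof -
  have W: "(\<lambda>\<omega>. \<lambda>i\<in>L. X i \<omega>) \<in> \<Omega> \<rightarrow>\<^sub>M PiM L (\<lambda>_. borel)" by (intro measurable_restrict Xm)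
  have W': "(\<lambda>\<omega>. \<lambda>i\<in>L'. X i \<omega>) \<in> \<Omega> \<rightarrow>\<^sub>M PiM L' (\<lambda>_. borel)" by (intro measurable_restrict Xm)
  have R: "{w\<in>space (PiM L (\<lambda>_. borel)). restrict w L' \<in> C} \<in> sets (PiM L (\<lambda>_. (borel::'d measure)))"
  proof -
    have "{w\<in>space (PiM L (\<lambda>_. borel)). restrict w L' \<in> C} = (\<lambda>w. restrict w L') -` C \<inter> space (PiM L (\<lambda>_. (borel::'d measure)))"
      by auto
    also have "\<dots> \<in> sets (PiM L (\<lambda>_. borel))"
      using measurable_sets[OF measurable_restrict_subset[OF sub] C] .
    finally show ?thesis .
  qed
  have "(\<lambda>\<omega>. \<lambda>i\<in>L. X i \<omega>) -` {w\<in>space (PiM L (\<lambda>_. borel)). restrict w L' \<in> C} \<inter> space \<Omega>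
      = (\<lambda>\<omega>. \<lambda>i\<in>L'. X i \<omega>) -` C \<inter> space \<Omega>"
  proof -
    have rr: "restrict (\<lambda>i\<in>L. X i \<omega>) L' = (\<lambda>i\<in>L'. X i \<omega>)" for \<omega>
      using sub by (auto simp: fun_eq_iff)
    have sp: "(\<lambda>i\<in>L. X i \<omega>) \<in> space (PiM L (\<lambda>_. (borel::'d measure)))" for \<omega> by (simp add: space_PiM)
    show ?thesis using rr sp by auto
  qed
  then show ?thesis
    using R C by (simp add: emeasure_distr[OF W R] emeasure_distr[OF W' C])
qed

theorem proposition5p3:
  fixes \<alpha> :: real
    and \<Omega>\<^sub>Y :: "'a measure" and Y :: "int \<Rightarrow> 'a \<Rightarrow> 'd::euclidean_space"
    and \<Omega>\<^sub>M :: "'b measure" and M :: "int \<Rightarrow> 'b \<Rightarrow> 'd"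
  assumes "\<alpha> > 0"
    and "prob_space \<Omega>\<^sub>Y" and "\<And>t. Y t \<in> borel_measurable \<Omega>\<^sub>Y"
    and "prob_space \<Omega>\<^sub>M" and "back_and_forth_tail_chain \<alpha> \<Omega>\<^sub>M M"
    and "\<And>t::nat. distr \<Omega>\<^sub>Y (PiM {0..int t} (\<lambda>_. borel)) (\<lambda>\<omega>. \<lambda>i\<in>{0..int t}. Y i \<omega>)
                 = distr \<Omega>\<^sub>M (PiM {0..int t} (\<lambda>_. borel)) (\<lambda>\<omega>. \<lambda>i\<in>{0..int t}. M i \<omega>)"
    and "\<And>(s::nat) (t::nat) (f :: (int \<Rightarrow> 'd) \<Rightarrow> real).
           f \<in> borel_measurable (PiM {- int s..int t} (\<lambda>_. borel)) \<Longrightarrow>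
           bounded (f ` space (PiM {- int s..int t} (\<lambda>_. (borel :: 'd measure)))) \<Longrightarrow>
           (\<forall>y \<in> space (PiM {- int s..int t} (\<lambda>_. (borel :: 'd measure))). y (- int s) = 0 \<longrightarrow> f y = 0) \<Longrightarrow>
           (\<integral>\<omega>. f (\<lambda>i\<in>{- int s..int t}. Y i \<omega>) \<partial>\<Omega>\<^sub>Y)
           = (\<integral>\<omega>. f (\<lambda>i\<in>{- int s..int t}. Y (i + int s) \<omega> /\<^sub>R norm (Y (int s) \<omega>))
                   * norm (Y (int s) \<omega>) powr \<alpha> * indicator {\<omega>. Y (int s) \<omega> \<noteq> 0} \<omega> \<partial>\<Omega>\<^sub>Y)"
  shows "\<forall>s t::nat.
           distr \<Omega>\<^sub>Y (PiM {- int s..int t} (\<lambda>_. borel)) (\<lambda>\<omega>. \<lambda>i\<in>{- int s..int t}. Y i \<omega>)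
           = distr \<Omega>\<^sub>M (PiM {- int s..int t} (\<lambda>_. borel)) (\<lambda>\<omega>. \<lambda>i\<in>{- int s..int t}. M i \<omega>)"
proof -
  obtain \<kappa>f \<kappa>b where btc: "btc \<alpha> \<Omega>\<^sub>M M \<kappa>f \<kappa>b"
    using btc_from_def[OF assms(1) assms(4) assms(5)] by blast
  interpret btc \<alpha> \<Omega>\<^sub>M M \<kappa>f \<kappa>b by (rule btc)
  have main: "\<forall>t::nat. distr \<Omega>\<^sub>Y (PiM {- int s..int t} (\<lambda>_. borel)) (\<lambda>\<omega>. \<lambda>i\<in>{- int s..int t}. Y i \<omega>)
           = distr \<Omega>\<^sub>M (PiM {- int s..int t} (\<lambda>_. borel)) (\<lambda>\<omega>. \<lambda>i\<in>{- int s..int t}. M i \<omega>)" for s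
  proof (induction s)
    case 0
    show ?case
    proof
      fix t :: nat
      show "distr \<Omega>\<^sub>Y (PiM {- int 0..int t} (\<lambda>_. borel)) (\<lambda>\<omega>. \<lambda>i\<in>{- int 0..int t}. Y i \<omega>)
           = distr \<Omega>\<^sub>M (PiM {- int 0..int t} (\<lambda>_. borel)) (\<lambda>\<omega>. \<lambda>i\<in>{- int 0..int t}. M i \<omega>)"
        using assms(6)[of t] by (simp only: of_nat_0 minus_zero)
    qed
  next
    case (Suc s)
    show ?case
    proof
      fix t :: nat
      define a where "a = - int (Suc s)"
      define L where "L = {- int (Suc s)..int t}"
      define L' where "L' = {- int s..int t}"
      have aL: "a \<in> L" by (simp add: a_def L_def)
      have L'L: "L' \<subseteq> L" by (auto simp: L_def L'_def)
      have insL: "insert a L' = L" by (auto simp: a_def L_def L'_def)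
      have aL': "a \<notin> L'" by (simp add: a_def L'_def)
      define \<mu>Y where "\<mu>Y = distr \<Omega>\<^sub>Y (PiM L (\<lambda>_. borel)) (\<lambda>\<omega>. \<lambda>i\<in>L. Y i \<omega>)"
      define \<mu>M where "\<mu>M = distr \<Omega>\<^sub>M (PiM L (\<lambda>_. borel)) (\<lambda>\<omega>. \<lambda>i\<in>L. M i \<omega>)"
      have IH: "distr \<Omega>\<^sub>Y (PiM L' (\<lambda>_. borel)) (\<lambda>\<omega>. \<lambda>i\<in>L'. Y i \<omega>)
           = distr \<Omega>\<^sub>M (PiM L' (\<lambda>_. borel)) (\<lambda>\<omega>. \<lambda>i\<in>L'. M i \<omega>)"
        using spec[OF Suc.IH, of t] unfolding L'_def .
      have NZ: "emeasure \<mu>Y B = emeasure \<mu>M B"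
        if B: "B \<in> sets (PiM L (\<lambda>_. (borel::'d measure)))" and Bnz: "\<And>w. w \<in> B \<Longrightarrow> w a \<noteq> 0" for B
        unfolding \<mu>Y_def \<mu>M_def L_def
        by (rule nonzero_part[OF btc assms(2,3,6,7)]) (use B Bnz in \<open>simp_all add: L_def a_def\<close>)
      have "\<mu>Y = \<mu>M"
      proof (rule measure_eqI)
        show "sets \<mu>Y = sets \<mu>M" by (simp add: \<mu>Y_def \<mu>M_def)
      next
        fix A assume "A \<in> sets \<mu>Y"
        then have A: "A \<in> sets (PiM L (\<lambda>_. (borel::'d measure)))" by (simp add: \<mu>Y_def)
        have Asp: "A \<subseteq> space (PiM L (\<lambda>_. (borel::'d measure)))" using sets.sets_into_space[OF A] .
        have nzs: "{w\<in>space (PiM L (\<lambda>_. borel)). w a \<noteq> 0} \<in> sets (PiM L (\<lambda>_. (borel::'d measure)))"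
        proof -
          have "(\<lambda>w. w a) \<in> PiM L (\<lambda>_. borel) \<rightarrow>\<^sub>M (borel::'d measure)"
            by (rule measurable_component_singleton[OF aL])
          then have "(\<lambda>w. w a) -` (- {0}) \<inter> space (PiM L (\<lambda>_. borel)) \<in> sets (PiM L (\<lambda>_. (borel::'d measure)))"
            by (rule measurable_sets) simp
          moreover have "(\<lambda>w. w a) -` (- {0}) \<inter> space (PiM L (\<lambda>_. borel)) = {w\<in>space (PiM L (\<lambda>_. borel)). w a \<noteq> (0::'d)}"
            by auto
          ultimately show ?thesis by simp
        qed
        define A1 where "A1 = A \<inter> {w\<in>space (PiM L (\<lambda>_. borel)). w a \<noteq> 0}"
        define A0 where "A0 = A - A1"
        have A1s: "A1 \<in> sets (PiM L (\<lambda>_. borel))" using A nzs by (simp add: A1_def)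
        have A0s: "A0 \<in> sets (PiM L (\<lambda>_. borel))" using A A1s by (simp add: A0_def)
        define C where "C = {w'\<in>space (PiM L' (\<lambda>_. borel)). w'(a := 0) \<in> A}"
        have Cs: "C \<in> sets (PiM L' (\<lambda>_. (borel::'d measure)))"
        proof -
          have m: "(\<lambda>w'. w'(a := (0::'d))) \<in> PiM L' (\<lambda>_. borel) \<rightarrow>\<^sub>M PiM L (\<lambda>_. borel)"
            using measurable_compose[OF measurable_Pair[OF measurable_ident_sets[OF refl] measurable_const[of "0::'d" borel]] upd_meas[of a L']]
            by (simp add: insL)
          have "C = (\<lambda>w'. w'(a := (0::'d))) -` A \<inter> space (PiM L' (\<lambda>_. borel))" by (auto simp: C_def)
          then show ?thesis using measurable_sets[OF m A] by simp
        qed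
        define R where "R = {w\<in>space (PiM L (\<lambda>_. borel)). restrict w L' \<in> C}"
        have Rs: "R \<in> sets (PiM L (\<lambda>_. (borel::'d measure)))"
        proof -
          have "R = (\<lambda>w. restrict w L') -` C \<inter> space (PiM L (\<lambda>_. (borel::'d measure)))" by (auto simp: R_def)
          then show ?thesis using measurable_sets[OF measurable_restrict_subset[OF L'L] Cs] by simp
        qed
        define R1 where "R1 = R \<inter> {w\<in>space (PiM L (\<lambda>_. borel)). w a \<noteq> 0}"
        have R1s: "R1 \<in> sets (PiM L (\<lambda>_. borel))" using Rs nzs by (simp add: R1_def)
        have rest: "(restrict w L')(a := 0) = w" if "w \<in> space (PiM L (\<lambda>_. (borel::'d measure)))" "w a = 0" for w
          using that insL aL' by (auto simp: fun_eq_iff space_PiM PiE_def extensional_def)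
        have restsp: "restrict w L' \<in> space (PiM L' (\<lambda>_. (borel::'d measure)))" for w
          by (simp add: space_PiM)
        have RA: "R = A0 \<union> R1"
        proof (intro equalityI subsetI)
          fix w assume w: "w \<in> R"
          show "w \<in> A0 \<union> R1"
          proof (cases "w a = 0")
            case True
            then have "w \<in> A" using w rest[of w] by (auto simp: R_def C_def)
            then show ?thesis using True by (auto simp: A0_def A1_def)
          qed (use w in \<open>auto simp: R1_def R_def\<close>)
        next
          fix w assume "w \<in> A0 \<union> R1"
          then show "w \<in> R"
          proof
            assume w: "w \<in> A0"
            then have wA: "w \<in> A" and wsp: "w \<in> space (PiM L (\<lambda>_. borel))" and w0: "w a = 0"
              using Asp by (auto simp: A0_def A1_def)
            show "w \<in> R" using wA wsp w0 rest[OF wsp w0] restsp[of w] by (auto simp: R_def C_def)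
          qed (auto simp: R1_def)
        qed
        have disj: "A0 \<inter> R1 = {}" by (auto simp: A0_def A1_def R1_def)
        have AA: "A = A1 \<union> A0" and disjA: "A1 \<inter> A0 = {}" by (auto simp: A0_def A1_def)
        have eqA1: "emeasure \<mu>Y A1 = emeasure \<mu>M A1" using A1s by (rule NZ) (auto simp: A1_def)
        have eqR1: "emeasure \<mu>Y R1 = emeasure \<mu>M R1" using R1s by (rule NZ) (auto simp: R1_def)
        have eqR: "emeasure \<mu>Y R = emeasure \<mu>M R"
          unfolding \<mu>Y_def \<mu>M_def R_def
          using restr_emeasure[OF assms(3) L'L Cs] restr_emeasure[OF Mm L'L Cs] IH by simp
        have sY: "sets \<mu>Y = sets (PiM L (\<lambda>_. borel))" and sM: "sets \<mu>M = sets (PiM L (\<lambda>_. borel))"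
          by (simp_all add: \<mu>Y_def \<mu>M_def)
        have pR: "emeasure \<mu>Y R1 + emeasure \<mu>Y A0 = emeasure \<mu>Y R" "emeasure \<mu>M R1 + emeasure \<mu>M A0 = emeasure \<mu>M R"
          using plus_emeasure[of R1 \<mu>Y A0] plus_emeasure[of R1 \<mu>M A0] R1s A0s disj sY sM RA
          by (auto simp: Un_commute Int_commute)
        have finR1: "emeasure \<mu>Y R1 \<noteq> \<infinity>"
        proof -
          interpret YY: prob_space \<Omega>\<^sub>Y by (rule assms(2))
          have "(\<lambda>\<omega>. \<lambda>i\<in>L. Y i \<omega>) \<in> \<Omega>\<^sub>Y \<rightarrow>\<^sub>M PiM L (\<lambda>_. borel)" by (intro measurable_restrict assms(3))
          then interpret D: prob_space \<mu>Y unfolding \<mu>Y_def by (rule YY.prob_space_distr)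
          show ?thesis by (simp add: D.emeasure_eq_measure)
        qed
        have eqA0: "emeasure \<mu>Y A0 = emeasure \<mu>M A0"
          using pR eqR eqR1 finR1 by (metis ennreal_add_left_cancel)
        have "emeasure \<mu>Y A = emeasure \<mu>Y A1 + emeasure \<mu>Y A0"
          using plus_emeasure[of A1 \<mu>Y A0] A1s A0s disjA sY AA by simp
        also have "\<dots> = emeasure \<mu>M A1 + emeasure \<mu>M A0" by (simp add: eqA1 eqA0)
        also have "\<dots> = emeasure \<mu>M A"
          using plus_emeasure[of A1 \<mu>M A0] A1s A0s disjA sM AA by simp
        finally show "emeasure \<mu>Y A = emeasure \<mu>M A" .
      qed
      then show "distr \<Omega>\<^sub>Y (PiM {- int (Suc s)..int t} (\<lambda>_. borel)) (\<lambda>\<omega>. \<lambda>i\<in>{- int (Suc s)..int t}. Y i \<omega>)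
           = distr \<Omega>\<^sub>M (PiM {- int (Suc s)..int t} (\<lambda>_. borel)) (\<lambda>\<omega>. \<lambda>i\<in>{- int (Suc s)..int t}. M i \<omega>)"
        by (simp add: \<mu>Y_def \<mu>M_def L_def)
    qed
  qed
  then show ?thesis by blast
qed


end
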